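(* Let $F$ be a Banach lattice, $E$ a Banach space and $S\in\mathcal{L}(F,E)$. The following are equivalent: (i) for every disjoint sequence $(f_n)$ of nonzero elements of $F$, $S$ is not bounded from below on $\overline{\mathrm{span}}\{f_n\}$; (ii) for every such $(f_n)$, the restriction of $S$ to $\overline{\mathrm{span}}\{f_n\}$ is strictly singular; (iii) the restriction of $S$ to every anti-dispersed closed subspace of $F$ is strictly singular; (iv) no restriction of $S$ to a non-dispersed closed subspace of $F$ is bounded from below; (v) no restriction of $S$ to a non-dispersed closed subspace of $F$ is upper semi-Fredholm; (vi) every non-dispersed closed subspace $G$ of $F$ contains an almost disjoint sequence $(g_n)$ with $\|Sg_n\|\to0$. An operator satisfying these conditions is called disjointly strictly singular (DSS).
   Context: $\mathrm{S}_X$ is the unit sphere; $x,y$ disjoint means $|x|\wedge|y|=0$. A sequence $(g_n)$ in the unit sphere of a subspace $G$ is almost disjoint if there is a disjoint $(f_n)\subset F$ with $\|f_n-g_n\|\to0$. A subspace is dispersed if it contains no almost disjoint sequence; a closed subspace is anti-dispersed if it contains no infinite-dimensional closed dispersed subspace. An operator is upper semi-Fredholm if it has finite-dimensional kernel and closed range, and strictly singular if no restriction to an infinite-dimensional subspace is bounded from below. *)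

theory Defs
  imports "HOL-Analysis.Analysis"
begin

class banach_lattice = banach + ordered_real_vector + lattice +
  assumes lattice_norm: "sup x (-x) \<le> sup y (-y) \<Longrightarrow> norm x \<le> norm y"

definition labs :: "'a::banach_lattice \<Rightarrow> 'a" where
  "labs x = sup x (-x)"

instance real :: banach_lattice
  by standard (auto simp: sup_real_def)

definition ldisjoint :: "'a::banach_lattice \<Rightarrow> 'a \<Rightarrow> bool" where
  "ldisjoint x y \<longleftrightarrow> inf (labs x) (labs y) = 0"

definition disjoint_seq :: "(nat \<Rightarrow> 'a::banach_lattice) \<Rightarrow> bool" where
  "disjoint_seq f \<longleftrightarrow> (\<forall>n m. n \<noteq> m \<longrightarrow> ldisjoint (f n) (f m))"

definition closed_subspace :: "'a::real_normed_vector set \<Rightarrow> bool" where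
  "closed_subspace G \<longleftrightarrow> subspace G \<and> closed G"

definition infinite_dimensional :: "'a::real_vector set \<Rightarrow> bool" where
  "infinite_dimensional H \<longleftrightarrow> \<not> (\<exists>B. finite B \<and> span B = H)"

definition finite_dimensional :: "'a::real_vector set \<Rightarrow> bool" where
  "finite_dimensional H \<longleftrightarrow> (\<exists>B. finite B \<and> span B = H)"

definition almost_disjoint_in :: "'a::banach_lattice set \<Rightarrow> (nat \<Rightarrow> 'a) \<Rightarrow> bool" where
  "almost_disjoint_in G g \<longleftrightarrow>
     (\<forall>n. g n \<in> G \<and> norm (g n) = 1) \<and>
     (\<exists>f. disjoint_seq f \<and> (\<lambda>n. norm (f n - g n)) \<longlonglongrightarrow> 0)"

definition dispersed :: "'a::banach_lattice set \<Rightarrow> bool" where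
  "dispersed G \<longleftrightarrow> subspace G \<and> \<not> (\<exists>g. almost_disjoint_in G g)"

definition anti_dispersed :: "'a::banach_lattice set \<Rightarrow> bool" where
  "anti_dispersed G \<longleftrightarrow> closed_subspace G \<and>
     \<not> (\<exists>H. H \<subseteq> G \<and> closed_subspace H \<and> infinite_dimensional H \<and> dispersed H)"

definition bounded_below_on :: "('a::real_normed_vector \<Rightarrow> 'b::real_normed_vector) \<Rightarrow> 'a set \<Rightarrow> bool" where
  "bounded_below_on S G \<longleftrightarrow> (\<exists>c>0. \<forall>x\<in>G. c * norm x \<le> norm (S x))"

definition strictly_singular_on :: "('a::real_normed_vector \<Rightarrow> 'b::real_normed_vector) \<Rightarrow> 'a set \<Rightarrow> bool" where
  "strictly_singular_on S G \<longleftrightarrow>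
     (\<forall>H. subspace H \<and> H \<subseteq> G \<and> infinite_dimensional H \<longrightarrow> \<not> bounded_below_on S H)"

definition upper_semi_fredholm_on :: "('a::real_normed_vector \<Rightarrow> 'b::real_normed_vector) \<Rightarrow> 'a set \<Rightarrow> bool" where
  "upper_semi_fredholm_on S G \<longleftrightarrow>
     finite_dimensional {x\<in>G. S x = 0} \<and> closed (S ` G)"

end

theory Submission
  imports Defs "HOL-Library.Lattice_Algebras"
begin
context banach_lattice begin
subclass lattice_ab_group_add ..
end

lemma scaleR_sup_pos:
  fixes u v :: "'a::banach_lattice"
  assumes "0 \<le> c"
  shows "c *\<^sub>R sup u v = sup (c *\<^sub>R u) (c *\<^sub>R v)"
proof (cases "c = 0")
  case True then show ?thesis by simp
next
  case False
  with assms have c: "0 < c" by simp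
  have le1: "sup (c *\<^sub>R u) (c *\<^sub>R v) \<le> c *\<^sub>R sup u v"
    by (simp add: assms scaleR_left_mono)
  have "u \<le> (1/c) *\<^sub>R sup (c *\<^sub>R u) (c *\<^sub>R v)"
  proof -
    have "(1/c) *\<^sub>R (c *\<^sub>R u) \<le> (1/c) *\<^sub>R sup (c *\<^sub>R u) (c *\<^sub>R v)"
      using c by (intro scaleR_left_mono) auto
    then show ?thesis using c by simp
  qed
  moreover have "v \<le> (1/c) *\<^sub>R sup (c *\<^sub>R u) (c *\<^sub>R v)"
  proof -
    have "(1/c) *\<^sub>R (c *\<^sub>R v) \<le> (1/c) *\<^sub>R sup (c *\<^sub>R u) (c *\<^sub>R v)"
      using c by (intro scaleR_left_mono) auto
    then show ?thesis using c by simp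
  qed
  ultimately have "sup u v \<le> (1/c) *\<^sub>R sup (c *\<^sub>R u) (c *\<^sub>R v)" by simp
  then have "c *\<^sub>R sup u v \<le> c *\<^sub>R ((1/c) *\<^sub>R sup (c *\<^sub>R u) (c *\<^sub>R v))"
    using c by (intro scaleR_left_mono) auto
  then have "c *\<^sub>R sup u v \<le> sup (c *\<^sub>R u) (c *\<^sub>R v)" using c by simp
  with le1 show ?thesis by (rule antisym[rotated])
qed

lemma scaleR_inf_pos:
  fixes u v :: "'a::banach_lattice"
  assumes "0 \<le> c"
  shows "c *\<^sub>R inf u v = inf (c *\<^sub>R u) (c *\<^sub>R v)"
proof (cases "c = 0")
  case True then show ?thesis by simp
next
  case False
  with assms have c: "0 < c" by simp
  have le1: "c *\<^sub>R inf u v \<le> inf (c *\<^sub>R u) (c *\<^sub>R v)"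
    by (simp add: assms scaleR_left_mono)
  have "(1/c) *\<^sub>R inf (c *\<^sub>R u) (c *\<^sub>R v) \<le> (1/c) *\<^sub>R (c *\<^sub>R u)"
    using c by (intro scaleR_left_mono) auto
  then have "(1/c) *\<^sub>R inf (c *\<^sub>R u) (c *\<^sub>R v) \<le> u" using c by simp
  moreover have "(1/c) *\<^sub>R inf (c *\<^sub>R u) (c *\<^sub>R v) \<le> (1/c) *\<^sub>R (c *\<^sub>R v)"
    using c by (intro scaleR_left_mono) auto
  then have "(1/c) *\<^sub>R inf (c *\<^sub>R u) (c *\<^sub>R v) \<le> v" using c by simp
  ultimately have "(1/c) *\<^sub>R inf (c *\<^sub>R u) (c *\<^sub>R v) \<le> inf u v" by simp
  then have "c *\<^sub>R ((1/c) *\<^sub>R inf (c *\<^sub>R u) (c *\<^sub>R v)) \<le> c *\<^sub>R inf u v"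
    using c by (intro scaleR_left_mono) auto
  then have "inf (c *\<^sub>R u) (c *\<^sub>R v) \<le> c *\<^sub>R inf u v" using c by simp
  with le1 show ?thesis by (rule antisym)
qed

lemma labs_nonneg: "0 \<le> labs (x::'a::banach_lattice)"
proof -
  have "x + (-x) \<le> labs x + labs x" unfolding labs_def by (intro add_mono) auto
  then have "0 \<le> labs x + labs x" by simp
  also have "labs x + labs x = (2::real) *\<^sub>R labs x" by (rule scaleR_2[symmetric])
  finally have h: "0 \<le> (2::real) *\<^sub>R labs x" .
  have "0 \<le> (1/2::real) *\<^sub>R ((2::real) *\<^sub>R labs x)" by (rule scaleR_nonneg_nonneg[OF _ h]) simp
  also have "(1/2::real) *\<^sub>R ((2::real) *\<^sub>R labs x) = labs x"
    by (simp only: scaleR_scaleR) simp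
  finally show ?thesis .
qed

lemma labs_uminus [simp]: "labs (- (x::'a::banach_lattice)) = labs x"
  unfolding labs_def by (simp add: sup_commute)

lemma labs_zero [simp]: "labs (0::'a::banach_lattice) = 0"
  unfolding labs_def by simp

lemma labs_triangle: "labs ((x::'a::banach_lattice) + y) \<le> labs x + labs y"
  unfolding labs_def
  by (intro sup_least; (simp only: minus_add_distrib)?; intro add_mono) (auto simp: add.commute)

lemma labs_scaleR: "labs (a *\<^sub>R (x::'a::banach_lattice)) = \<bar>a\<bar> *\<^sub>R labs x"
proof (cases "0 \<le> a")
  case True
  then show ?thesis unfolding labs_def using scaleR_sup_pos[OF True, of x "-x"] by simp
next
  case False
  then have "a *\<^sub>R x = \<bar>a\<bar> *\<^sub>R (-x)" by simp
  then show ?thesis unfolding labs_def using scaleR_sup_pos[of "\<bar>a\<bar>" "-x" "x"]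
    by (simp add: sup_commute)
qed

lemma labs_of_nonneg: "0 \<le> (x::'a::banach_lattice) \<Longrightarrow> labs x = x"
  unfolding labs_def by (rule sup_absorb1) (meson order_trans neg_le_0_iff_le)

lemma labs_labs [simp]: "labs (labs (x::'a::banach_lattice)) = labs x"
  by (simp add: labs_of_nonneg labs_nonneg)

lemma norm_labs_mono: "labs (x::'a::banach_lattice) \<le> labs y \<Longrightarrow> norm x \<le> norm y"
  using lattice_norm unfolding labs_def by blast

lemma norm_labs [simp]: "norm (labs (x::'a::banach_lattice)) = norm x"
  using norm_labs_mono[of x "labs x"] norm_labs_mono[of "labs x" x] by simp

lemma inf_add_le:
  fixes a b c :: "'a::banach_lattice"
  assumes "0 \<le> a" "0 \<le> b" "0 \<le> c"
  shows "inf (a + b) c \<le> inf a c + inf b c"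
proof -
  have "inf a c + inf b c = inf (inf a c + b) (inf a c + c)"
    by (simp add: add_inf_distrib_left)
  also have "\<dots> = inf (inf (a + b) (c + b)) (inf (a + c) (c + c))"
    by (simp add: add_inf_distrib_right)
  finally have eq: "inf a c + inf b c = inf (inf (a + b) (c + b)) (inf (a + c) (c + c))" .
  have "inf (a + b) c \<le> c + b" using assms by (meson inf_le2 le_add_same_cancel1 order_trans)
  moreover have "inf (a + b) c \<le> a + c" using assms by (meson inf_le2 le_add_same_cancel2 order_trans)
  moreover have "inf (a + b) c \<le> c + c" using assms by (meson inf_le2 le_add_same_cancel2 order_trans)
  ultimately show ?thesis unfolding eq by simp
qed

lemma ldisjoint_sym: "ldisjoint x y \<longleftrightarrow> ldisjoint y x"
  unfolding ldisjoint_def by (simp add: inf_commute)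

lemma ldisjoint_zero [simp]: "ldisjoint 0 y"
  unfolding ldisjoint_def by (simp add: inf_absorb1 labs_nonneg)

lemma inf_nonneg: "0 \<le> (a::'a::banach_lattice) \<Longrightarrow> 0 \<le> b \<Longrightarrow> 0 \<le> inf a b"
  by simp

lemma ldisjoint_add:
  assumes "ldisjoint x z" "ldisjoint y z"
  shows "ldisjoint (x + y) z"
proof -
  have "inf (labs (x + y)) (labs z) \<le> inf (labs x + labs y) (labs z)"
    using labs_triangle by (meson inf_mono order_refl)
  also have "\<dots> \<le> inf (labs x) (labs z) + inf (labs y) (labs z)"
    by (intro inf_add_le labs_nonneg)
  also have "\<dots> = 0" using assms unfolding ldisjoint_def by simp
  finally show ?thesis unfolding ldisjoint_def
    by (intro antisym) (auto simp: labs_nonneg)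
qed

lemma ldisjoint_scaleR:
  assumes "ldisjoint x z"
  shows "ldisjoint (a *\<^sub>R x) z"
proof -
  define c where "c = max 1 \<bar>a\<bar>"
  have c: "0 \<le> c" "1 \<le> c" "\<bar>a\<bar> \<le> c" unfolding c_def by auto
  have "\<bar>a\<bar> *\<^sub>R labs x \<le> c *\<^sub>R labs x"
    using c by (intro scaleR_right_mono labs_nonneg) auto
  moreover have "labs z \<le> c *\<^sub>R labs z"
  proof -
    have "1 *\<^sub>R labs z \<le> c *\<^sub>R labs z" using c by (intro scaleR_right_mono labs_nonneg) auto
    then show ?thesis by simp
  qed
  ultimately have "inf (\<bar>a\<bar> *\<^sub>R labs x) (labs z) \<le> inf (c *\<^sub>R labs x) (c *\<^sub>R labs z)"
    by (rule inf_mono)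
  then have "inf (labs (a *\<^sub>R x)) (labs z) \<le> inf (c *\<^sub>R labs x) (c *\<^sub>R labs z)"
    by (simp add: labs_scaleR)
  also have "\<dots> = c *\<^sub>R inf (labs x) (labs z)" using scaleR_inf_pos[OF c(1)] by metis
  also have "\<dots> = 0" using assms unfolding ldisjoint_def by simp
  finally show ?thesis unfolding ldisjoint_def
    by (intro antisym) (auto simp: labs_nonneg)
qed

lemma ldisjoint_sum:
  assumes "finite A" "\<And>i. i \<in> A \<Longrightarrow> ldisjoint (h i) z"
  shows "ldisjoint (sum h A) z"
  using assms by (induction A rule: finite_induct) (auto intro: ldisjoint_add)

lemma ldisjoint_uminus: "ldisjoint x z \<Longrightarrow> ldisjoint (- x) z"
  using ldisjoint_scaleR[of x z "-1"] by simp

lemma ldisjoint_norm_le: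
  fixes u r :: "'a::banach_lattice"
  assumes "ldisjoint u r"
  shows "norm u \<le> norm (u + r)"
proof -
  have "labs u = labs ((u + r) + (- r))" by simp
  also have "\<dots> \<le> labs (u + r) + labs r" using labs_triangle[of "u + r" "-r"] by simp
  finally have le: "labs u \<le> labs (u + r) + labs r" .
  have "labs u = inf (labs (u + r) + labs r) (labs u)" using le by (simp add: inf_absorb2)
  also have "\<dots> \<le> inf (labs (u + r)) (labs u) + inf (labs r) (labs u)"
    by (intro inf_add_le labs_nonneg)
  also have "inf (labs r) (labs u) = 0" using assms unfolding ldisjoint_def by (simp add: inf_commute)
  finally have "labs u \<le> labs (u + r)" by (simp add: le_infE)
  then show ?thesis by (rule norm_labs_mono)
qed

lemma ldisjoint_self: "ldisjoint x x \<Longrightarrow> x = 0"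
proof -
  assume "ldisjoint x x"
  then have "labs x = 0" unfolding ldisjoint_def by simp
  then have "norm x = 0" using norm_labs[of x] by simp
  then show "x = 0" by simp
qed

lemma disjoint_seq_inj:
  assumes "disjoint_seq f" "\<And>n. f n \<noteq> 0"
  shows "inj f"
proof (rule injI)
  fix n m assume eq: "f n = f m"
  show "n = m"
  proof (rule ccontr)
    assume "n \<noteq> m"
    then have "ldisjoint (f n) (f m)" using assms(1) unfolding disjoint_seq_def by blast
    then have "f n = 0" using eq ldisjoint_self by simp
    then show False using assms(2) by blast
  qed
qed

lemma disjoint_seq_term_disj:
  assumes "disjoint_seq f" "finite A" "k \<notin> A"
  shows "ldisjoint (c *\<^sub>R f k) (\<Sum>n\<in>A. a n *\<^sub>R f n)"
proof -
  have "ldisjoint (\<Sum>n\<in>A. a n *\<^sub>R f n) (c *\<^sub>R f k)"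
  proof (rule ldisjoint_sum[OF assms(2)])
    fix n assume n: "n \<in> A"
    then have "n \<noteq> k" using assms(3) by blast
    then have "ldisjoint (f n) (f k)" using assms(1) unfolding disjoint_seq_def by blast
    then have "ldisjoint (a n *\<^sub>R f n) (f k)" by (rule ldisjoint_scaleR)
    then have "ldisjoint (f k) (a n *\<^sub>R f n)" by (subst ldisjoint_sym)
    then have "ldisjoint (c *\<^sub>R f k) (a n *\<^sub>R f n)" by (rule ldisjoint_scaleR)
    then show "ldisjoint (a n *\<^sub>R f n) (c *\<^sub>R f k)" by (subst ldisjoint_sym)
  qed
  then show ?thesis by (subst ldisjoint_sym)
qed

lemma disjoint_seq_coef_le:
  assumes "disjoint_seq f" "finite A" "k \<in> A"
  shows "norm (a k *\<^sub>R f k) \<le> norm (\<Sum>n\<in>A. a n *\<^sub>R f n)"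
proof -
  have "(\<Sum>n\<in>A. a n *\<^sub>R f n) = a k *\<^sub>R f k + (\<Sum>n\<in>A - {k}. a n *\<^sub>R f n)"
    using assms by (simp add: sum.remove)
  moreover have "ldisjoint (a k *\<^sub>R f k) (\<Sum>n\<in>A - {k}. a n *\<^sub>R f n)"
    using assms by (intro disjoint_seq_term_disj) auto
  ultimately show ?thesis using ldisjoint_norm_le by metis
qed

lemma disjoint_seq_block_disj:
  assumes "disjoint_seq f" "finite A" "finite B" "A \<inter> B = {}"
  shows "ldisjoint (\<Sum>n\<in>A. a n *\<^sub>R f n) (\<Sum>n\<in>B. b n *\<^sub>R f n)"
  using assms by (intro ldisjoint_sum disjoint_seq_term_disj) auto

lemma disjoint_seq_norm_diff:
  assumes "disjoint_seq f" "n \<noteq> m"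
  shows "norm (f n) \<le> norm (f n - f m)"
proof -
  have "ldisjoint (f n) (- f m)" using assms unfolding disjoint_seq_def
    by (metis ldisjoint_sym ldisjoint_uminus)
  then show ?thesis using ldisjoint_norm_le by fastforce
qed

lemma span_image_rep:
  assumes "x \<in> span (f ` I)"
  obtains A a where "finite A" "A \<subseteq> I" "x = (\<Sum>n\<in>A. a n *\<^sub>R f n)"
proof -
  from assms obtain t r where t: "finite t" "t \<subseteq> f ` I" "x = (\<Sum>v\<in>t. r v *\<^sub>R v)"
    unfolding span_explicit by blast
  from t(2) have "\<exists>A. A \<subseteq> I \<and> inj_on f A \<and> t = f ` A" by (simp add: subset_image_inj)
  then obtain A where A: "A \<subseteq> I" "inj_on f A" "t = f ` A" by blast
  have "finite A" using finite_image_iff[OF A(2)] t(1) A(3) by simp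
  have "x = (\<Sum>v\<in>f ` A. r v *\<^sub>R v)" using t(3) A(3) by (simp only:)
  also have "\<dots> = (\<Sum>n\<in>A. r (f n) *\<^sub>R f n)" by (rule sum.reindex_cong[OF A(2) refl]) simp
  finally have "x = (\<Sum>n\<in>A. r (f n) *\<^sub>R f n)" .
  then show ?thesis by (rule that[OF \<open>finite A\<close> A(1)])
qed

lemma sum_in_span: "A \<subseteq> I \<Longrightarrow> (\<Sum>n\<in>A. a n *\<^sub>R f n) \<in> span (f ` I)"
  by (intro span_sum span_scale span_base) auto

lemma bounded_below_closure:
  assumes "bounded_linear S" "bounded_below_on S A"
  shows "bounded_below_on S (closure A)"
proof -
  from assms(2) obtain c where c: "c > 0" "\<forall>x\<in>A. c * norm x \<le> norm (S x)"
    unfolding bounded_below_on_def by blast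
  have contS: "continuous_on UNIV S"
    using assms(1) by (simp add: linear_continuous_on)
  have "closed {x. c * norm x \<le> norm (S x)}"
    by (intro closed_Collect_le continuous_intros continuous_on_compose2[OF _ contS]) auto
  moreover have "A \<subseteq> {x. c * norm x \<le> norm (S x)}" using c by auto
  ultimately have "closure A \<subseteq> {x. c * norm x \<le> norm (S x)}" by (rule closure_minimal[rotated])
  then show ?thesis using c unfolding bounded_below_on_def by blast
qed

lemma subspace_closure_nv:
  assumes "subspace (A::'a::real_normed_vector set)"
  shows "subspace (closure A)"
  unfolding subspace_def
proof (intro conjI ballI allI)
  show "0 \<in> closure A" using assms closure_subset subspace_0 by blast
next
  fix x y assume "x \<in> closure A" "y \<in> closure A"
  then obtain s t where "\<forall>n. s n \<in> A" "s \<longlonglongrightarrow> x" "\<forall>n. t n \<in> A" "t \<longlonglongrightarrow> y"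
    unfolding closure_sequential by blast
  note st = this
  have 1: "\<forall>n. s n + t n \<in> A" using st(1,3) assms subspace_add by blast
  have 2: "(\<lambda>n. s n + t n) \<longlonglongrightarrow> x + y" using st(2,4) by (rule tendsto_add)
  show "x + y \<in> closure A" unfolding closure_sequential using 1 2 by (intro exI[of _ "\<lambda>n. s n + t n"] conjI)
next
  fix c x assume "x \<in> closure A"
  then obtain s where "\<forall>n. s n \<in> A" "s \<longlonglongrightarrow> x"
    unfolding closure_sequential by blast
  note st = this
  have 1: "\<forall>n. c *\<^sub>R s n \<in> A" using st(1) assms subspace_scale by blast
  have 2: "(\<lambda>n. c *\<^sub>R s n) \<longlonglongrightarrow> c *\<^sub>R x" using st(2) by (intro tendsto_scaleR tendsto_const)
  show "c *\<^sub>R x \<in> closure A" unfolding closure_sequential using 1 2 by (intro exI[of _ "\<lambda>n. c *\<^sub>R s n"] conjI)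
qed

lemma dep_family:
  assumes "finite B" "finite I" "card I > card B" "\<And>k. k \<in> I \<Longrightarrow> w k \<in> span B"
  obtains c where "\<exists>k\<in>I. c k \<noteq> 0" "(\<Sum>k\<in>I. c k *\<^sub>R w k) = 0"
proof (cases "inj_on w I")
  case True
  have fin: "finite (w ` I)" using assms by auto
  have card: "card (w ` I) = card I" using True card_image by blast
  have "dependent (w ` I)"
  proof (rule ccontr)
    assume "\<not> dependent (w ` I)"
    then have "card (w ` I) \<le> card B"
      using independent_span_bound[OF assms(1)] assms(4) by auto
    then show False using card assms(3) by simp
  qed
  then obtain u where u: "\<exists>v\<in>w ` I. u v \<noteq> 0" "(\<Sum>v\<in>w ` I. u v *\<^sub>R v) = 0"
    using dependent_finite[OF fin] by blast
  show ?thesis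
  proof (rule that[of "\<lambda>k. u (w k)"])
    show "\<exists>k\<in>I. u (w k) \<noteq> 0" using u(1) by blast
    show "(\<Sum>k\<in>I. u (w k) *\<^sub>R w k) = 0" using u(2) True by (simp add: sum.reindex)
  qed
next
  case False
  then obtain k1 k2 where k: "k1 \<in> I" "k2 \<in> I" "k1 \<noteq> k2" "w k1 = w k2"
    unfolding inj_on_def by blast
  define c where "c = (\<lambda>k. if k = k1 then 1 else if k = k2 then -1 else (0::real))"
  have "(\<Sum>k\<in>I. c k *\<^sub>R w k) = (\<Sum>k\<in>{k1,k2}. c k *\<^sub>R w k)"
    using k assms(2) by (intro sum.mono_neutral_right) (auto simp: c_def)
  also have "\<dots> = 0" using k by (simp add: c_def)
  finally have s0: "(\<Sum>k\<in>I. c k *\<^sub>R w k) = 0" .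
  have "\<exists>k\<in>I. c k \<noteq> 0" using k by (auto simp: c_def)
  then show ?thesis using s0 by (rule that)
qed

lemma closed_span_of_ne:
  fixes B :: "'a::real_normed_vector set"
  assumes "finite B" "m > 0" "\<And>u. m * (\<Sum>b\<in>B. \<bar>u b\<bar>) \<le> norm (\<Sum>b\<in>B. u b *\<^sub>R b)"
  shows "closed (span B)"
  unfolding closed_sequential_limits
proof (intro allI impI, elim conjE)
  fix x l assume xs: "\<forall>n. x n \<in> span B" and lim: "x \<longlonglongrightarrow> l"
  have "\<forall>n. \<exists>u. x n = (\<Sum>b\<in>B. u b *\<^sub>R b)" using xs span_finite[OF assms(1)] by auto
  then obtain u where u: "\<And>n. x n = (\<Sum>b\<in>B. u n b *\<^sub>R b)" by metis
  have diff: "x p - x q = (\<Sum>b\<in>B. (u p b - u q b) *\<^sub>R b)" for p q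
    by (simp add: u sum_subtractf scaleR_diff_left)
  have C: "Cauchy x" using lim by (rule LIMSEQ_imp_Cauchy)
  have "convergent (\<lambda>n. u n b)" if b: "b \<in> B" for b
  proof -
    have "Cauchy (\<lambda>n. u n b)"
    proof (rule CauchyI)
      fix e :: real assume e: "e > 0"
      then obtain M where M: "\<And>p q. p \<ge> M \<Longrightarrow> q \<ge> M \<Longrightarrow> norm (x p - x q) < e * m"
        using CauchyD[OF C, of "e * m"] assms(2) by auto
      show "\<exists>M. \<forall>p\<ge>M. \<forall>q\<ge>M. norm (u p b - u q b) < e"
      proof (intro exI allI impI)
        fix p q assume pq: "p \<ge> M" "q \<ge> M"
        have "\<bar>u p b - u q b\<bar> \<le> (\<Sum>b\<in>B. \<bar>u p b - u q b\<bar>)"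
          using b assms(1) by (intro member_le_sum) auto
        also have "m * \<dots> \<le> norm (x p - x q)" using assms(3)[of "\<lambda>b. u p b - u q b"] diff by simp
        then have "(\<Sum>b\<in>B. \<bar>u p b - u q b\<bar>) \<le> norm (x p - x q) / m"
          using assms(2) by (simp add: field_simps)
        also have "\<dots> < e" using M[OF pq] assms(2) by (simp add: field_simps)
        finally show "norm (u p b - u q b) < e" by simp
      qed
    qed
    then show ?thesis by (simp add: Cauchy_convergent_iff)
  qed
  then have "\<forall>b\<in>B. \<exists>U. (\<lambda>n. u n b) \<longlonglongrightarrow> U" by (auto simp: convergent_def)
  then obtain U where U: "\<And>b. b \<in> B \<Longrightarrow> (\<lambda>n. u n b) \<longlonglongrightarrow> U b" by metis
  have "(\<lambda>n. \<Sum>b\<in>B. u n b *\<^sub>R b) \<longlonglongrightarrow> (\<Sum>b\<in>B. U b *\<^sub>R b)"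
    by (intro tendsto_sum tendsto_scaleR U tendsto_const)
  moreover have "x = (\<lambda>n. \<Sum>b\<in>B. u n b *\<^sub>R b)" by (rule ext) (rule u)
  ultimately have "x \<longlonglongrightarrow> (\<Sum>b\<in>B. U b *\<^sub>R b)" by simp
  then have "l = (\<Sum>b\<in>B. U b *\<^sub>R b)" using lim LIMSEQ_unique by blast
  then show "l \<in> span B" by (simp add: span_sum span_scale span_base)
qed

lemma norm_equiv_independent:
  fixes B :: "'a::real_normed_vector set"
  assumes "finite B" "independent B"
  shows "\<exists>m>0. \<forall>u. m * (\<Sum>b\<in>B. \<bar>u b\<bar>) \<le> norm (\<Sum>b\<in>B. u b *\<^sub>R b)"
  using assms
proof (induction B rule: finite_induct)
  case empty
  show ?case by (intro exI[of _ 1]) simp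
next
  case (insert a B)
  have indB: "independent B" and aB: "a \<notin> span B"
    using insert.prems insert.hyps(2) by (auto simp: independent_insert)
  obtain m where m: "m > 0" "\<And>u. m * (\<Sum>b\<in>B. \<bar>u b\<bar>) \<le> norm (\<Sum>b\<in>B. u b *\<^sub>R b)"
    using insert.IH[OF indB] by blast
  have cl: "closed (span B)" by (rule closed_span_of_ne[OF insert.hyps(1) m])
  define d where "d = infdist a (span B)"
  have d: "d > 0" unfolding d_def
    using infdist_pos_not_in_closed[OF cl _ aB] span_zero by blast
  define m' where "m' = 1 / (1/d + (1 + norm a / d) / m)"
  have pos: "1/d + (1 + norm a / d) / m > 0" using d m by (simp add: add_pos_nonneg)
  have m'pos: "m' > 0" unfolding m'_def using pos by simp
  show ?case
  proof (intro exI[of _ m'] conjI allI m'pos)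
    fix u :: "'a \<Rightarrow> real"
    define t where "t = u a"
    define v where "v = (\<Sum>b\<in>B. u b *\<^sub>R b)"
    define x where "x = t *\<^sub>R a + v"
    have xeq: "(\<Sum>b\<in>insert a B. u b *\<^sub>R b) = x"
      using insert.hyps by (simp add: x_def t_def v_def)
    have seq: "(\<Sum>b\<in>insert a B. \<bar>u b\<bar>) = \<bar>t\<bar> + (\<Sum>b\<in>B. \<bar>u b\<bar>)"
      using insert.hyps by (simp add: t_def)
    have c1: "\<bar>t\<bar> * d \<le> norm x"
    proof (cases "t = 0")
      case True then show ?thesis by simp
    next
      case False
      have "- ((1/t) *\<^sub>R v) \<in> span B" unfolding v_def
        by (intro span_neg span_scale span_sum span_base) auto
      then have "d \<le> dist a (- ((1/t) *\<^sub>R v))" unfolding d_def by (rule infdist_le)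
      also have "\<dots> = norm (a + (1/t) *\<^sub>R v)" by (simp add: dist_norm)
      finally have "\<bar>t\<bar> * d \<le> \<bar>t\<bar> * norm (a + (1/t) *\<^sub>R v)"
        by (simp add: mult_left_mono)
      also have "\<dots> = norm (t *\<^sub>R (a + (1/t) *\<^sub>R v))" by simp
      also have "t *\<^sub>R (a + (1/t) *\<^sub>R v) = x" using False by (simp add: x_def scaleR_add_right)
      finally show ?thesis .
    qed
    have tle: "\<bar>t\<bar> \<le> norm x / d" using c1 d by (simp add: field_simps)
    have "norm v \<le> norm x + norm (t *\<^sub>R a)"
      using norm_triangle_ineq4[of x "t *\<^sub>R a"] by (simp add: x_def)
    then have vle: "norm v \<le> norm x + \<bar>t\<bar> * norm a" by simp
    have "m * (\<Sum>b\<in>B. \<bar>u b\<bar>) \<le> norm v" using m(2) by (simp add: v_def)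
    then have "(\<Sum>b\<in>B. \<bar>u b\<bar>) \<le> norm v / m" using m by (simp add: field_simps)
    also have "\<dots> \<le> (norm x + \<bar>t\<bar> * norm a) / m" using vle m by (simp add: divide_right_mono)
    also have "\<dots> \<le> (norm x + norm x / d * norm a) / m"
      using tle m by (intro divide_right_mono add_left_mono mult_right_mono) auto
    finally have sB: "(\<Sum>b\<in>B. \<bar>u b\<bar>) \<le> (norm x + norm x / d * norm a) / m" .
    have "\<bar>t\<bar> + (\<Sum>b\<in>B. \<bar>u b\<bar>) \<le> norm x / d + (norm x + norm x / d * norm a) / m"
      using tle sB by linarith
    also have "\<dots> = norm x * (1/d + (1 + norm a / d) / m)" by (simp add: field_simps)
    finally have "\<bar>t\<bar> + (\<Sum>b\<in>B. \<bar>u b\<bar>) \<le> norm x * (1/d + (1 + norm a / d) / m)" .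
    then have "m' * (\<bar>t\<bar> + (\<Sum>b\<in>B. \<bar>u b\<bar>)) \<le> m' * (norm x * (1/d + (1 + norm a / d) / m))"
      using m'pos by (intro mult_left_mono) auto
    also have "\<dots> = norm x" unfolding m'_def using pos by simp
    finally show "m' * (\<Sum>b\<in>insert a B. \<bar>u b\<bar>) \<le> norm (\<Sum>b\<in>insert a B. u b *\<^sub>R b)"
      using seq xeq by simp
  qed
qed

lemma blocks:
  fixes P :: "nat \<Rightarrow> nat set \<Rightarrow> 'z \<Rightarrow> bool"
  assumes "\<And>N k. \<exists>A z. finite A \<and> A \<subseteq> {N..} \<and> P k A z"
  obtains As zs where "\<And>k. finite (As k)" "\<And>k. As k \<subseteq> {k..}" "\<And>k. P k (As k) (zs k)"
    "\<And>k j. k \<noteq> j \<Longrightarrow> As k \<inter> As j = {}"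
proof -
  define ch where "ch N k = (SOME p. finite (fst p) \<and> fst p \<subseteq> {N..} \<and> P k (fst p) (snd p))" for N k
  have ch: "finite (fst (ch N k)) \<and> fst (ch N k) \<subseteq> {N..} \<and> P k (fst (ch N k)) (snd (ch N k))" for N k
  proof -
    from assms[of N k] obtain A z where "finite A \<and> A \<subseteq> {N..} \<and> P k A z" by (elim exE)
    then have "\<exists>p. finite (fst p) \<and> fst p \<subseteq> {N..} \<and> P k (fst p) (snd p)" by (intro exI[of _ "(A, z)"]) simp
    then show ?thesis unfolding ch_def by (rule someI_ex)
  qed
  define Ns where "Ns = rec_nat 0 (\<lambda>k n. Suc (Max (insert n (fst (ch n k)))))"
  have Ns0: "Ns 0 = 0" and NsS: "Ns (Suc k) = Suc (Max (insert (Ns k) (fst (ch (Ns k) k))))" for k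
    by (simp_all add: Ns_def)
  define As where "As k = fst (ch (Ns k) k)" for k
  define zs where "zs k = snd (ch (Ns k) k)" for k
  have finA: "finite (As k)" for k using ch unfolding As_def by blast
  have Alow: "n \<in> As k \<Longrightarrow> Ns k \<le> n" for n k using ch unfolding As_def by blast
  have Ahigh: "n \<in> As k \<Longrightarrow> n < Ns (Suc k)" for n k
  proof -
    assume "n \<in> As k"
    then have "n \<le> Max (insert (Ns k) (As k))" using finA by (intro Max_ge) auto
    then show ?thesis by (simp add: NsS As_def)
  qed
  have NsSuc: "Ns k < Ns (Suc k)" for k
  proof -
    have "Ns k \<le> Max (insert (Ns k) (fst (ch (Ns k) k)))" using ch by (intro Max_ge) auto
    then show ?thesis by (simp add: NsS)
  qed
  have mono: "strict_mono Ns" using NsSuc by (simp add: strict_mono_Suc_iff)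
  have kle: "k \<le> Ns k" for k
  proof (induction k)
    case 0 then show ?case by simp
  next
    case (Suc k) then show ?case using NsSuc[of k] by simp
  qed
  show ?thesis
  proof (rule that[of As zs])
    show "finite (As k)" for k by (rule finA)
    show "As k \<subseteq> {k..}" for k
    proof
      fix n assume "n \<in> As k"
      then have "Ns k \<le> n" by (rule Alow)
      then show "n \<in> {k..}" using kle[of k] by simp
    qed
    show "P k (As k) (zs k)" for k using ch unfolding As_def zs_def by blast
    show "As k \<inter> As j = {}" if "k \<noteq> j" for k j
    proof -
      have *: "As k \<inter> As j = {}" if "k < j" for k j
      proof -
        have "Ns (Suc k) \<le> Ns j" using that mono by (simp add: strict_mono_less_eq)
        show ?thesis
        proof (rule equals0I)
          fix n assume "n \<in> As k \<inter> As j"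
          then have "n < Ns (Suc k)" "Ns j \<le> n" using Ahigh[of n k] Alow[of n j] by auto
          with \<open>Ns (Suc k) \<le> Ns j\<close> show False by linarith
        qed
      qed
      show ?thesis using \<open>k \<noteq> j\<close> *[of k j] *[of j k] by (cases "k < j") auto
    qed
  qed
qed

lemma eventually_subseq:
  fixes P :: "nat \<Rightarrow> nat \<Rightarrow> bool"
  assumes "\<And>k. eventually (\<lambda>n. P k n) sequentially"
  obtains \<sigma> where "strict_mono \<sigma>" "\<And>k. P k (\<sigma> k)"
proof -
  have "\<forall>k. \<exists>N. \<forall>n\<ge>N. P k n" using assms by (simp add: eventually_sequentially)
  then obtain N where N: "\<And>k n. n \<ge> N k \<Longrightarrow> P k n" by metis
  define \<sigma> where "\<sigma> = rec_nat (N 0) (\<lambda>k s. max (N (Suc k)) (Suc s))"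
  have s0: "\<sigma> 0 = N 0" and sS: "\<sigma> (Suc k) = max (N (Suc k)) (Suc (\<sigma> k))" for k
    by (simp_all add: \<sigma>_def)
  have "strict_mono \<sigma>" by (simp add: strict_mono_Suc_iff sS less_max_iff_disj)
  moreover have "\<sigma> k \<ge> N k" for k by (cases k) (simp_all add: s0 sS)
  ultimately show ?thesis using N by (intro that) auto
qed

lemma geom_tail:
  assumes "finite A" "A \<subseteq> {N..}"
  shows "(\<Sum>n\<in>A. (1/2::real)^(n+1)) \<le> (1/2)^N"
proof -
  have eq: "(\<Sum>n\<in>{N..<N+k}. (1/2::real)^(n+1)) = (1/2)^N - (1/2)^(N+k)" for k
  proof (induction k)
    case 0 then show ?case by simp
  next
    case (Suc k)
    have "{N..<N + Suc k} = insert (N+k) {N..<N+k}" by auto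
    then have "(\<Sum>n\<in>{N..<N+Suc k}. (1/2::real)^(n+1)) = (1/2)^(N+k+1) + (\<Sum>n\<in>{N..<N+k}. (1/2::real)^(n+1))"
      by simp
    also have "\<dots> = (1/2)^N - (1/2)^(N + Suc k)" using Suc by simp
    finally show ?case .
  qed
  obtain k where k: "A \<subseteq> {N..<N+k}"
  proof
    show "A \<subseteq> {N..<N + Suc (Max (insert N A))}"
      using assms by (auto simp: less_Suc_eq_le intro!: Max_ge le_SucI intro: trans_le_add2)
  qed
  have "(\<Sum>n\<in>A. (1/2::real)^(n+1)) \<le> (\<Sum>n\<in>{N..<N+k}. (1/2::real)^(n+1))"
    using k by (intro sum_mono2) auto
  also have "\<dots> \<le> (1/2)^N" unfolding eq by simp
  finally show ?thesis .
qed

lemma om_baire: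
  fixes T :: "'a::banach \<Rightarrow> 'b::banach"
  assumes T: "bounded_linear T" and G: "subspace G" and R: "closed (T ` G)"
  shows "\<exists>n::nat. \<exists>y0 r. r > 0 \<and> y0 \<in> T ` G \<and> T ` G \<inter> ball y0 r \<subseteq> closure (T ` (G \<inter> cball 0 (real n)))"
proof (rule ccontr)
  assume neg: "\<not> ?thesis"
  define X where "X = top_of_set (T ` G)"
  define \<G> where "\<G> = range (\<lambda>n::nat. T ` G \<inter> closure (T ` (G \<inter> cball 0 (real n))))"
  have "closedin euclidean (T ` G)" using R[unfolded closed_closedin] .
  then have cm: "completely_metrizable_space X" unfolding X_def
    by (rule completely_metrizable_space_closedin[OF completely_metrizable_space_euclidean])
  have "X interior_of \<Union>\<G> = {}"
  proof (rule Baire_category_alt)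
    show "completely_metrizable_space X \<or> locally_compact_space X \<and> regular_space X" using cm by blast
    show "countable \<G>" unfolding \<G>_def by simp
    fix S assume "S \<in> \<G>"
    then obtain n where n: "S = T ` G \<inter> closure (T ` (G \<inter> cball 0 (real n)))" unfolding \<G>_def by blast
    show "closedin X S \<and> X interior_of S = {}"
    proof
      show "closedin X S" unfolding X_def n by (simp add: closedin_closed_Int)
      show "X interior_of S = {}"
      proof (rule equals0I)
        fix y0 assume "y0 \<in> X interior_of S"
        then obtain U where U: "openin X U" "y0 \<in> U" "U \<subseteq> S" unfolding interior_of_def by blast
        from U(1) obtain V where V: "open V" "U = T ` G \<inter> V" unfolding X_def openin_open by blast
        from V U(2) obtain r where r: "r > 0" "ball y0 r \<subseteq> V" using open_contains_ball by blast
        have yG: "y0 \<in> T ` G" using U(2) V by blast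
        have sub: "T ` G \<inter> ball y0 r \<subseteq> closure (T ` (G \<inter> cball 0 (real n)))"
          using r U(3) V n by blast
        show False
          apply (rule notE[OF neg])
          apply (intro exI[of _ n] exI[of _ y0] exI[of _ r] conjI r(1) yG sub)
          done
      qed
    qed
  qed
  moreover have "\<Union>\<G> = T ` G"
  proof
    show "\<Union>\<G> \<subseteq> T ` G" unfolding \<G>_def by blast
    show "T ` G \<subseteq> \<Union>\<G>"
    proof
      fix y assume yR: "y \<in> T ` G"
      then obtain x where x: "x \<in> G" "y = T x" by blast
      obtain n :: nat where "norm x \<le> real n" using real_arch_simple by blast
      then have "y \<in> T ` (G \<inter> cball 0 (real n))" using x by auto
      then have "y \<in> closure (T ` (G \<inter> cball 0 (real n)))" using closure_subset by (rule subsetD[rotated])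
      then have "y \<in> T ` G \<inter> closure (T ` (G \<inter> cball 0 (real n)))" using yR by (rule IntI[rotated])
      then show "y \<in> \<Union>\<G>" unfolding \<G>_def by blast
    qed
  qed
  moreover have "X interior_of (T ` G) = T ` G"
  proof -
    have "topspace X = T ` G" unfolding X_def by simp
    then show ?thesis using interior_of_topspace[of X] by simp
  qed
  moreover have "0 \<in> T ` G"
  proof -
    have "T 0 = 0" using T by (simp add: linear_simps)
    then show ?thesis using image_eqI[OF _ subspace_0[OF G]] by metis
  qed
  ultimately show False by simp
qed

lemma om_approx:
  fixes T :: "'a::banach \<Rightarrow> 'b::banach"
  assumes T: "bounded_linear T" and G: "subspace G" and R: "closed (T ` G)"
  shows "\<exists>M\<ge>0. \<forall>y\<in>T ` G. \<forall>e>0. \<exists>x\<in>G. norm x \<le> M * norm y \<and> norm (y - T x) < e"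
proof -
  obtain n :: nat and y0 r where r: "r > 0" and y0: "y0 \<in> T ` G"
    and sub: "T ` G \<inter> ball y0 r \<subseteq> closure (T ` (G \<inter> cball 0 (real n)))"
    using om_baire[OF assms] by blast
  have lin: "linear T" using T bounded_linear.linear by blast
  have RS: "subspace (T ` G)" using linear_subspace_image[OF lin G] .
  have step: "\<exists>x\<in>G. norm x \<le> 2 * real n \<and> norm (y - T x) < e"
    if y: "y \<in> T ` G" "norm y < r" and e: "e > 0" for y e
  proof -
    have "y0 + y \<in> T ` G" using RS y0 y subspace_add by blast
    moreover have "y0 + y \<in> ball y0 r" using y by (simp add: dist_norm)
    ultimately have "y0 + y \<in> closure (T ` (G \<inter> cball 0 (real n)))" using sub by blast
    then obtain z1 where z1: "z1 \<in> T ` (G \<inter> cball 0 (real n))" "dist z1 (y0 + y) < e/2"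
      using e closure_approachable[of "y0 + y"] by (meson half_gt_zero)
    have "y0 \<in> closure (T ` (G \<inter> cball 0 (real n)))" using sub y0 r by auto
    then obtain z2 where z2: "z2 \<in> T ` (G \<inter> cball 0 (real n))" "dist z2 y0 < e/2"
      using e closure_approachable[of y0] by (meson half_gt_zero)
    obtain x1 where x1: "x1 \<in> G" "norm x1 \<le> real n" "z1 = T x1" using z1(1) by auto
    obtain x2 where x2: "x2 \<in> G" "norm x2 \<le> real n" "z2 = T x2" using z2(1) by auto
    have "x1 - x2 \<in> G" using G x1 x2 subspace_diff by blast
    moreover have "norm (x1 - x2) \<le> 2 * real n"
      using norm_triangle_ineq4[of x1 x2] x1 x2 by simp
    moreover have "norm (y - T (x1 - x2)) < e"
    proof -
      have "T (x1 - x2) = T x1 - T x2" using linear_diff[OF lin] .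
      then have "y - T (x1 - x2) = ((y0 + y) - T x1) - (y0 - T x2)"
        by (simp add: algebra_simps)
      then have "norm (y - T (x1 - x2)) \<le> norm ((y0 + y) - T x1) + norm (y0 - T x2)"
        using norm_triangle_ineq4[of "(y0 + y) - T x1" "y0 - T x2"] by (simp only:)
      also have "\<dots> < e/2 + e/2" using z1(2) z2(2) x1(3) x2(3)
        by (intro add_strict_mono) (auto simp: dist_norm norm_minus_commute)
      finally show ?thesis by simp
    qed
    ultimately show ?thesis by blast
  qed
  define M where "M = 4 * real n / r"
  have M: "M \<ge> 0" unfolding M_def using r by simp
  have "\<exists>x\<in>G. norm x \<le> M * norm y \<and> norm (y - T x) < e"
    if y: "y \<in> T ` G" and e: "e > 0" for y e
  proof (cases "y = 0")
    case True
    then show ?thesis using e G subspace_0 linear_0[OF lin] by (intro bexI[of _ 0]) auto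
  next
    case False
    define l where "l = r / (2 * norm y)"
    have l: "l > 0" unfolding l_def using r False by simp
    have "l *\<^sub>R y \<in> T ` G" using RS y subspace_scale by blast
    moreover have "norm (l *\<^sub>R y) < r" using l r False by (simp add: l_def)
    ultimately obtain x' where x': "x' \<in> G" "norm x' \<le> 2 * real n" "norm (l *\<^sub>R y - T x') < l * e"
      using step l e by (meson mult_pos_pos)
    define x where "x = (1/l) *\<^sub>R x'"
    have "x \<in> G" unfolding x_def using G x'(1) subspace_scale by blast
    moreover have "norm x \<le> M * norm y"
    proof -
      have "norm x = norm x' / l" unfolding x_def using l by simp
      also have "\<dots> \<le> 2 * real n / l" using x'(2) l by (simp add: divide_right_mono)
      also have "\<dots> = M * norm y" unfolding M_def l_def using False r by (simp add: field_simps)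
      finally show ?thesis .
    qed
    moreover have "norm (y - T x) < e"
    proof -
      have "y - T x = (1/l) *\<^sub>R (l *\<^sub>R y - T x')"
        unfolding x_def using l linear_scale[OF lin] by (simp add: algebra_simps)
      then have "norm (y - T x) = norm (l *\<^sub>R y - T x') / l" using l by simp
      also have "\<dots> < e" using x'(3) l by (simp add: field_simps)
      finally show ?thesis .
    qed
    ultimately show ?thesis by blast
  qed
  then show ?thesis using M by blast
qed

lemma open_mapping_bound:
  fixes T :: "'a::banach \<Rightarrow> 'b::banach"
  assumes T: "bounded_linear T" and G: "subspace G" "closed G" and R: "closed (T ` G)"
  shows "\<exists>C>0. \<forall>y\<in>T ` G. \<exists>x\<in>G. T x = y \<and> norm x \<le> C * norm y"
proof -
  obtain M where M: "M \<ge> 0" and apx: "\<And>y e. y \<in> T ` G \<Longrightarrow> e > 0 \<Longrightarrow> \<exists>x\<in>G. norm x \<le> M * norm y \<and> norm (y - T x) < e"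
    using om_approx[OF T G(1) R] by blast
  have lin: "linear T" using T bounded_linear.linear by blast
  have RS: "subspace (T ` G)" using linear_subspace_image[OF lin G(1)] .
  have main: "\<exists>x\<in>G. T x = y \<and> norm x \<le> (2 * M + 1) * norm y" if y: "y \<in> T ` G" for y
  proof (cases "y = 0")
    case True
    then show ?thesis using G subspace_0 linear_0[OF lin] by (intro bexI[of _ 0]) auto
  next
    case False
    define e where "e k = norm y * (1/2)^(k+1)" for k :: nat
    have epos: "e k > 0" for k unfolding e_def using False by simp
    define pick where "pick w k = (SOME x. x \<in> G \<and> norm x \<le> M * norm w \<and> norm (w - T x) < e k)" for w k
    have pick: "pick w k \<in> G \<and> norm (pick w k) \<le> M * norm w \<and> norm (w - T (pick w k)) < e k"
      if "w \<in> T ` G" for w k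
    proof -
      have "\<exists>x. x \<in> G \<and> norm x \<le> M * norm w \<and> norm (w - T x) < e k"
        using apx[OF that epos[of k]] by blast
      then show ?thesis unfolding pick_def by (rule someI_ex)
    qed
    define ys where "ys = rec_nat y (\<lambda>k w. w - T (pick w k))"
    have ys0: "ys 0 = y" and ysS: "ys (Suc k) = ys k - T (pick (ys k) k)" for k
      by (simp_all add: ys_def)
    have inv: "ys k \<in> T ` G \<and> norm (ys k) \<le> norm y * (1/2)^k" for k
    proof (induction k)
      case 0 then show ?case using y by (simp add: ys0)
    next
      case (Suc k)
      have p: "pick (ys k) k \<in> G" "norm (ys k - T (pick (ys k) k)) < e k"
        using pick[of "ys k" k] Suc by auto
      have "T (pick (ys k) k) \<in> T ` G" using p(1) by blast
      then have "ys (Suc k) \<in> T ` G" using RS Suc subspace_diff ysS by metis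
      moreover have "norm (ys (Suc k)) \<le> norm y * (1/2)^(Suc k)"
        using p(2) by (simp add: ysS e_def)
      ultimately show ?case by blast
    qed
    define xs where "xs k = pick (ys k) k" for k
    have xsG: "xs k \<in> G" for k using pick[of "ys k" k] inv[of k] unfolding xs_def by blast
    have xsn: "norm (xs k) \<le> M * norm y * (1/2)^k" for k
    proof -
      have "norm (xs k) \<le> M * norm (ys k)" using pick[of "ys k" k] inv[of k] unfolding xs_def by blast
      also have "\<dots> \<le> M * (norm y * (1/2)^k)" using inv[of k] M by (intro mult_left_mono) auto
      finally show ?thesis by simp
    qed
    have Txs: "T (xs k) = ys k - ys (Suc k)" for k by (simp add: ysS xs_def)
    have sg: "summable (\<lambda>k. M * norm y * (1/2::real)^k)"
      by (intro summable_mult summable_geometric) simp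
    have sx: "summable xs"
      by (rule summable_comparison_test[OF _ sg]) (use xsn in auto)
    define x where "x = suminf xs"
    have xsums: "xs sums x" using sx unfolding x_def by (simp add: summable_sums)
    have "x \<in> G"
    proof -
      have "(\<lambda>n. \<Sum>i<n. xs i) \<longlonglongrightarrow> x" using xsums by (simp add: sums_def)
      moreover have "\<forall>n. (\<Sum>i<n. xs i) \<in> G" using G(1) xsG by (simp add: subspace_sum)
      moreover have cs: "\<forall>x l. (\<forall>n. x n \<in> G) \<and> x \<longlonglongrightarrow> l \<longrightarrow> l \<in> G"
        using G(2) by (simp only: closed_sequential_limits)
      ultimately show ?thesis by (intro cs[rule_format] conjI)
    qed
    moreover have "norm x \<le> 2 * M * norm y"
    proof -
      have "norm x \<le> (\<Sum>k. M * norm y * (1/2::real)^k)"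
        unfolding x_def by (rule norm_suminf_le[OF xsn sg])
      also have "\<dots> = M * norm y * (\<Sum>k. (1/2::real)^k)" using summable_geometric[of "1/2::real"]
        by (intro suminf_mult) simp
      also have "(\<Sum>k. (1/2::real)^k) = 2" using suminf_geometric[of "1/2::real"] by simp
      finally show ?thesis by simp
    qed
    moreover have "T x = y"
    proof -
      have "(\<lambda>k. T (xs k)) sums T x" using bounded_linear.sums[OF T xsums] .
      moreover have "ys \<longlonglongrightarrow> 0"
      proof (rule Lim_null_comparison)
        show "\<forall>\<^sub>F k in sequentially. norm (ys k) \<le> norm y * (1/2)^k" using inv by simp
        show "(\<lambda>k. norm y * (1/2::real)^k) \<longlonglongrightarrow> 0"
          by (intro tendsto_mult_right_zero LIMSEQ_realpow_zero) auto
      qed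
      then have "(\<lambda>k. ys k - ys (Suc k)) sums (ys 0 - 0)" by (rule telescope_sums')
      ultimately show ?thesis using Txs ys0 sums_unique2 by fastforce
    qed
    ultimately show ?thesis using False by (intro bexI[of _ x]) (auto intro: order_trans)
  qed
  show ?thesis by (intro exI[of _ "2 * M + 1"]) (use M main in auto)
qed

lemma disjoint_seq_shift: "disjoint_seq f \<Longrightarrow> disjoint_seq (\<lambda>n. f (n + N))"
  unfolding disjoint_seq_def by simp

lemma range_shift: "range (\<lambda>n. f (n + (N::nat))) = f ` {N..}"
proof
  show "range (\<lambda>n. f (n + N)) \<subseteq> f ` {N..}"
  proof
    fix y assume "y \<in> range (\<lambda>n. f (n + N))"
    then obtain n where "y = f (n + N)" by blast
    moreover have "n + N \<in> {N..}" by simp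
    ultimately show "y \<in> f ` {N..}" by blast
  qed
  show "f ` {N..} \<subseteq> range (\<lambda>n. f (n + N))"
  proof
    fix y assume "y \<in> f ` {N..}"
    then obtain m where m: "m \<ge> N" "y = f m" by auto
    then have "y = f ((m - N) + N)" by simp
    then show "y \<in> range (\<lambda>n. f (n + N))" by (rule range_eqI)
  qed
qed

lemma almost_disjoint_refine:
  fixes g :: "nat \<Rightarrow> 'a::banach_lattice"
  assumes "almost_disjoint_in G g"
  obtains f' g' where "disjoint_seq f'" "\<And>n. f' n \<noteq> 0" "\<And>n. g' n \<in> G" "\<And>n. norm (g' n) = 1"
    "\<And>n. norm (f' n - g' n) \<le> (1/2)^(n+2) * norm (f' n)"
proof -
  from assms obtain f where g: "\<And>n. g n \<in> G" "\<And>n. norm (g n) = 1" and f: "disjoint_seq f"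
    and lim: "(\<lambda>n. norm (f n - g n)) \<longlonglongrightarrow> 0"
    unfolding almost_disjoint_in_def by blast
  have ev: "eventually (\<lambda>n. norm (f n - g n) \<le> (1/2)^(k+2) * norm (f n)) sequentially" for k
  proof -
    have "(1/2::real)^(k+2) > 0" by simp
    then have "eventually (\<lambda>n. norm (f n - g n) < (1/2)^(k+3)) sequentially"
      using order_tendstoD(2)[OF lim] by simp
    then show ?thesis
    proof (rule eventually_mono)
      fix n assume n: "norm (f n - g n) < (1/2::real)^(k+3)"
      have "(1/2::real)^(k+3) \<le> 1/2" using power_decreasing[of 1 "k+3" "1/2::real"] by simp
      then have small: "norm (f n - g n) < 1/2" using n by linarith
      have "1 = norm (g n)" using g by simp
      also have "\<dots> \<le> norm (f n) + norm (f n - g n)"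
        using norm_triangle_ineq4[of "f n" "f n - g n"] by simp
      finally have "norm (f n) \<ge> 1/2" using small by simp
      then have "(1/2::real)^(k+2) * (1/2) \<le> (1/2)^(k+2) * norm (f n)"
        by (intro mult_left_mono) auto
      moreover have "(1/2::real)^(k+3) = (1/2)^(k+2) * (1/2)"
      proof -
        have "k + 3 = Suc (k + 2)" by simp
        then show ?thesis by (simp only: power_Suc2)
      qed
      ultimately show "norm (f n - g n) \<le> (1/2)^(k+2) * norm (f n)" using n by linarith
    qed
  qed
  obtain \<sigma> where \<sigma>: "strict_mono \<sigma>" "\<And>k. norm (f (\<sigma> k) - g (\<sigma> k)) \<le> (1/2)^(k+2) * norm (f (\<sigma> k))"
    using eventually_subseq[of "\<lambda>k n. norm (f n - g n) \<le> (1/2)^(k+2) * norm (f n)", OF ev] by blast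
  have inj: "inj \<sigma>" using \<sigma>(1) strict_mono_imp_inj_on by blast
  show ?thesis
  proof (rule that[of "f \<circ> \<sigma>" "g \<circ> \<sigma>"])
    show "disjoint_seq (f \<circ> \<sigma>)" using f inj unfolding disjoint_seq_def inj_def by auto
    show "(g \<circ> \<sigma>) n \<in> G" for n using g by simp
    show "norm ((g \<circ> \<sigma>) n) = 1" for n using g by simp
    show nb: "norm ((f \<circ> \<sigma>) n - (g \<circ> \<sigma>) n) \<le> (1/2)^(n+2) * norm ((f \<circ> \<sigma>) n)" for n
      using \<sigma>(2) by simp
    show "(f \<circ> \<sigma>) n \<noteq> 0" for n
    proof
      assume "(f \<circ> \<sigma>) n = 0"
      then have "norm (g (\<sigma> n)) \<le> 0" using nb[of n] by simp
      then show False using g(2) by simp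
    qed
  qed
qed

lemma perturb_bound:
  fixes f g :: "nat \<Rightarrow> 'a::banach_lattice"
  assumes f: "disjoint_seq f" and b: "\<And>n. norm (f n - g n) \<le> (1/2)^(n+2) * norm (f n)"
    and A: "finite A" "A \<subseteq> {N..}"
  shows "norm ((\<Sum>n\<in>A. a n *\<^sub>R f n) - (\<Sum>n\<in>A. a n *\<^sub>R g n)) \<le> (1/2)^(N+1) * norm (\<Sum>n\<in>A. a n *\<^sub>R f n)"
proof -
  define X where "X = norm (\<Sum>n\<in>A. a n *\<^sub>R f n)"
  have "(\<Sum>n\<in>A. a n *\<^sub>R f n) - (\<Sum>n\<in>A. a n *\<^sub>R g n) = (\<Sum>n\<in>A. a n *\<^sub>R (f n - g n))"
    by (simp add: sum_subtractf scaleR_diff_right)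
  then have "norm ((\<Sum>n\<in>A. a n *\<^sub>R f n) - (\<Sum>n\<in>A. a n *\<^sub>R g n)) \<le> (\<Sum>n\<in>A. norm (a n *\<^sub>R (f n - g n)))"
    by (simp only: norm_sum)
  also have "\<dots> \<le> (\<Sum>n\<in>A. (1/2)^(n+2) * X)"
  proof (rule sum_mono)
    fix n assume n: "n \<in> A"
    have "norm (a n *\<^sub>R (f n - g n)) = \<bar>a n\<bar> * norm (f n - g n)" by simp
    also have "\<dots> \<le> \<bar>a n\<bar> * ((1/2)^(n+2) * norm (f n))" by (intro mult_left_mono b) auto
    also have "\<dots> = (1/2)^(n+2) * norm (a n *\<^sub>R f n)" by simp
    also have "\<dots> \<le> (1/2)^(n+2) * X" unfolding X_def
      by (intro mult_left_mono disjoint_seq_coef_le[OF f A(1) n]) auto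
    finally show "norm (a n *\<^sub>R (f n - g n)) \<le> (1/2)^(n+2) * X" .
  qed
  also have "\<dots> = (1/2) * (\<Sum>n\<in>A. (1/2::real)^(n+1)) * X"
    by (simp add: sum_distrib_left sum_distrib_right mult.assoc)
  also have "\<dots> \<le> (1/2) * (1/2)^N * X"
    using geom_tail[OF A] unfolding X_def by (intro mult_right_mono) auto
  also have "\<dots> = (1/2)^(N+1) * X" by simp
  finally show ?thesis unfolding X_def .
qed


lemma half_div_aux: "X > 0 \<Longrightarrow> (A * X) / (X / 2) = 2 * (A::real)"
  by (simp add: field_simps)

lemma c1_imp_c6:
  fixes S :: "'f::banach_lattice \<Rightarrow> 'e::real_normed_vector"
  assumes S: "bounded_linear S"
    and C1: "\<And>f::nat \<Rightarrow> 'f. (\<forall>n. f n \<noteq> 0) \<Longrightarrow> disjoint_seq f \<Longrightarrow>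
                    \<not> bounded_below_on S (closure (span (range f)))"
    and G: "subspace G" and nd: "\<not> dispersed G"
  shows "\<exists>g. almost_disjoint_in G g \<and> (\<lambda>n. norm (S (g n))) \<longlonglongrightarrow> 0"
proof -
  from nd G obtain g0 where g0: "almost_disjoint_in G g0" unfolding dispersed_def by blast
  have "\<exists>f g. disjoint_seq f \<and> (\<forall>n. f n \<noteq> 0) \<and> (\<forall>n. g n \<in> G) \<and> (\<forall>n. norm (g n) = 1) \<and>
     (\<forall>n. norm (f n - g n) \<le> (1/2)^(n+2) * norm (f n))"
    by (rule almost_disjoint_refine[OF g0]) blast
  then obtain f g where f: "disjoint_seq f" "\<And>n. f n \<noteq> 0" and g: "\<And>n. g n \<in> G" "\<And>n. norm (g n) = 1"
    and fg: "\<And>n. norm (f n - g n) \<le> (1/2)^(n+2) * norm (f n)"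
    by blast
  have lin: "linear S" using S bounded_linear.linear by blast
  obtain K where K: "K > 0" "\<And>x. norm (S x) \<le> norm x * K"
    using bounded_linear.pos_bounded[OF S] by blast
  have small: "\<exists>A a. finite A \<and> A \<subseteq> {N..} \<and> (\<Sum>n\<in>A. a n *\<^sub>R f n) \<noteq> 0 \<and>
      norm (S (\<Sum>n\<in>A. a n *\<^sub>R f n)) < (1 / real (Suc k)) * norm (\<Sum>n\<in>A. a n *\<^sub>R f n)" for N k
  proof -
    have "\<not> bounded_below_on S (closure (span (range (\<lambda>n. f (n + N)))))"
      using C1[of "\<lambda>n. f (n + N)"] f disjoint_seq_shift by blast
    then have "\<not> bounded_below_on S (span (f ` {N..}))"
      using bounded_below_closure[OF S] range_shift[of f N] by metis
    then have "\<not> (\<forall>x\<in>span (f ` {N..}). (1 / real (Suc k)) * norm x \<le> norm (S x))"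
      unfolding bounded_below_on_def by (metis divide_pos_pos of_nat_0_less_iff zero_less_Suc zero_less_one)
    then obtain x where x: "x \<in> span (f ` {N..})" "norm (S x) < (1 / real (Suc k)) * norm x"
      by (auto simp: not_le)
    have "x \<noteq> 0" using x(2) by auto
    obtain A a where A: "finite A" "A \<subseteq> {N..}" "x = (\<Sum>n\<in>A. a n *\<^sub>R f n)"
      using span_image_rep[OF x(1)] by blast
    show ?thesis
      apply (rule exI[of _ A], rule exI[of _ a])
      using A x \<open>x \<noteq> 0\<close> by simp
  qed
  define Pk where "Pk k A a \<longleftrightarrow> (\<Sum>n\<in>A. a n *\<^sub>R f n) \<noteq> 0 \<and>
      norm (S (\<Sum>n\<in>A. a n *\<^sub>R f n)) < (1 / real (Suc k)) * norm (\<Sum>n\<in>A. a n *\<^sub>R f n)"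
    for k A and a :: "nat \<Rightarrow> real"
  obtain As :: "nat \<Rightarrow> nat set" and as :: "nat \<Rightarrow> nat \<Rightarrow> real"
    where As: "\<And>k. finite (As k)" "\<And>k. As k \<subseteq> {k..}"
    and P: "\<And>k. Pk k (As k) (as k)"
    and D: "\<And>k j. k \<noteq> j \<Longrightarrow> As k \<inter> As j = {}"
    apply (rule blocks[of Pk])
    subgoal for N k using small[of N k] unfolding Pk_def by blast
    subgoal premises prems for As zs by (rule prems(1)[of As zs]) (rule prems; assumption)+
    done
  define x where "x k = (\<Sum>n\<in>As k. as k n *\<^sub>R f n)" for k
  define y where "y k = (\<Sum>n\<in>As k. as k n *\<^sub>R g n)" for k
  have xnz: "x k \<noteq> 0" for k using P[of k] unfolding x_def Pk_def by blast
  have Sx: "norm (S (x k)) < (1 / real (Suc k)) * norm (x k)" for k using P[of k] unfolding x_def Pk_def by blast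
  have xy: "norm (x k - y k) \<le> (1/2)^(k+1) * norm (x k)" for k
    unfolding x_def y_def by (rule perturb_bound[OF f(1) fg As(1) As(2)])
  have yG: "y k \<in> G" for k unfolding y_def
    using G g(1) by (intro subspace_sum subspace_scale) auto
  have ylow: "norm (x k) / 2 \<le> norm (y k)" for k
  proof -
    have "(1/2::real)^(k+1) \<le> (1/2)^1" by (intro power_decreasing) auto
    then have "(1/2)^(k+1) * norm (x k) \<le> (1/2) * norm (x k)" by (intro mult_right_mono) auto
    then have "norm (x k - y k) \<le> norm (x k) / 2" using xy[of k] by simp
    moreover have "norm (x k) \<le> norm (y k) + norm (x k - y k)"
      using norm_triangle_ineq4[of "y k" "y k - x k"] by (simp add: norm_minus_commute)
    ultimately show ?thesis by simp
  qed
  have ypos: "norm (y k) > 0" for k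
  proof -
    have "norm (x k) > 0" using xnz[of k] by simp
    then show ?thesis using ylow[of k] by linarith
  qed
  define u where "u k = (1 / norm (y k)) *\<^sub>R y k" for k
  define v where "v k = (1 / norm (y k)) *\<^sub>R x k" for k
  have uG: "u k \<in> G" for k unfolding u_def using G yG subspace_scale by blast
  have un: "norm (u k) = 1" for k unfolding u_def using ypos[of k] by simp
  have vdisj: "disjoint_seq v"
    unfolding disjoint_seq_def
  proof (intro allI impI)
    fix k j :: nat assume "k \<noteq> j"
    then have "ldisjoint (x k) (x j)" unfolding x_def
      using disjoint_seq_block_disj[OF f(1) As(1) As(1) D] by blast
    then show "ldisjoint (v k) (v j)" unfolding v_def
      by (metis ldisjoint_scaleR ldisjoint_sym)
  qed
  have vu: "norm (v k - u k) \<le> (1/2)^k" for k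
  proof -
    have "v k - u k = (1 / norm (y k)) *\<^sub>R (x k - y k)" unfolding u_def v_def
      by (simp add: scaleR_diff_right)
    then have "norm (v k - u k) = norm (x k - y k) / norm (y k)" by simp
    also have "\<dots> \<le> ((1/2)^(k+1) * norm (x k)) / (norm (x k) / 2)"
      using xy[of k] ylow[of k] xnz[of k] by (intro frac_le) auto
    also have "\<dots> = (1/2)^k" using xnz[of k] by (simp add: field_simps)
    finally show ?thesis .
  qed
  have Su: "norm (S (u k)) \<le> 2 / real (Suc k) + 2 * K * (1/2)^(k+1)" for k
  proof -
    have "S (u k) = (1 / norm (y k)) *\<^sub>R S (y k)" unfolding u_def
      using linear_scale[OF lin] by simp
    then have eq: "norm (S (u k)) = norm (S (y k)) / norm (y k)" by simp
    have "S (y k) = S (x k) - S (x k - y k)" using linear_diff[OF lin] by simp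
    then have "norm (S (y k)) \<le> norm (S (x k)) + norm (S (x k - y k))"
      by (simp add: norm_triangle_ineq4)
    also have "\<dots> \<le> (1 / real (Suc k)) * norm (x k) + norm (x k - y k) * K"
      using Sx[of k] K(2)[of "x k - y k"] by simp
    also have "\<dots> \<le> (1 / real (Suc k)) * norm (x k) + ((1/2)^(k+1) * norm (x k)) * K"
      using xy[of k] K(1) by (intro add_left_mono mult_right_mono) auto
    finally have num: "norm (S (y k)) \<le> (1 / real (Suc k) + (1/2)^(k+1) * K) * norm (x k)"
      by (simp add: algebra_simps)
    have "norm (S (u k)) \<le> ((1 / real (Suc k) + (1/2)^(k+1) * K) * norm (x k)) / (norm (x k) / 2)"
      unfolding eq using num ylow[of k] xnz[of k] K(1) by (intro frac_le) auto
    also have "\<dots> = 2 * (1 / real (Suc k) + (1/2)^(k+1) * K)"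
      by (rule half_div_aux) (use xnz[of k] in simp)
    also have "\<dots> = 2 / real (Suc k) + 2 * K * (1/2)^(k+1)" by (simp add: algebra_simps)
    finally show ?thesis .
  qed
  have "almost_disjoint_in G u"
    unfolding almost_disjoint_in_def
  proof (intro conjI allI exI[of _ v])
    show "u n \<in> G" "norm (u n) = 1" for n using uG un by auto
    show "disjoint_seq v" by (rule vdisj)
    show "(\<lambda>n. norm (v n - u n)) \<longlonglongrightarrow> 0"
    proof (rule Lim_null_comparison)
      show "\<forall>\<^sub>F n in sequentially. norm (norm (v n - u n)) \<le> (1/2)^n" using vu by simp
      show "(\<lambda>n. (1/2::real)^n) \<longlonglongrightarrow> 0" by (rule LIMSEQ_realpow_zero) auto
    qed
  qed
  moreover have "(\<lambda>n. norm (S (u n))) \<longlonglongrightarrow> 0"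
  proof (rule Lim_null_comparison)
    show "\<forall>\<^sub>F n in sequentially. norm (norm (S (u n))) \<le> 2 / real (Suc n) + 2 * K * (1/2)^(n+1)"
      using Su by simp
    have "(\<lambda>n. 2 / real (Suc n)) \<longlonglongrightarrow> 0"
      using LIMSEQ_Suc[OF lim_const_over_n[of "2::real"]] .
    moreover have "(\<lambda>n. 2 * K * (1/2::real)^(n+1)) \<longlonglongrightarrow> 0"
      by (intro tendsto_mult_right_zero) (simp add: LIMSEQ_realpow_zero LIMSEQ_Suc)
    ultimately show "(\<lambda>n. 2 / real (Suc n) + 2 * K * (1/2::real)^(n+1)) \<longlonglongrightarrow> 0"
      using tendsto_add by fastforce
  qed
  ultimately show ?thesis by blast
qed

lemma finite_dim_subspace_of_span:
  assumes "subspace H" "finite B" "H \<subseteq> span B"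
  shows "\<exists>B'. finite B' \<and> span B' = H"
proof -
  obtain B' where B': "B' \<subseteq> H" "independent B'" "H \<subseteq> span B'" "card B' = dim H"
    by (rule basis_exists)
  have "B' \<subseteq> span B" using B'(1) assms(3) by blast
  then have "finite B'" using independent_span_bound[OF assms(2) B'(2)] by blast
  moreover have "span B' = H"
  proof
    show "span B' \<subseteq> H" using B'(1) assms(1) by (rule span_minimal)
    show "H \<subseteq> span B'" by (rule B'(3))
  qed
  ultimately show ?thesis by blast
qed

lemma infinite_dim_closure:
  fixes H :: "'a::real_normed_vector set"
  assumes "subspace H" "infinite_dimensional H"
  shows "infinite_dimensional (closure H)"
  unfolding infinite_dimensional_def
proof
  assume "\<exists>B. finite B \<and> span B = closure H"
  then obtain B where B: "finite B" "span B = closure H" by blast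
  then have "H \<subseteq> span B" using closure_subset by blast
  then have "\<exists>B'. finite B' \<and> span B' = H" by (rule finite_dim_subspace_of_span[OF assms(1) B(1)])
  then show False using assms(2) unfolding infinite_dimensional_def by blast
qed

lemma infinite_dim_independent:
  assumes "subspace H" "infinite_dimensional H"
  shows "\<exists>Hs. finite Hs \<and> card Hs = n \<and> Hs \<subseteq> H \<and> independent Hs"
proof -
  obtain B where B: "B \<subseteq> H" "independent B" "H \<subseteq> span B" "card B = dim H"
    by (rule basis_exists)
  have "span B \<subseteq> H" using B(1) assms(1) by (rule span_minimal)
  then have "span B = H" using B(3) by (rule antisym)
  then have "infinite B" using assms(2) unfolding infinite_dimensional_def by blast
  then have "\<exists>Hs. finite Hs \<and> card Hs = n \<and> Hs \<subseteq> B" by (rule infinite_arbitrarily_large)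
  then obtain Hs where Hs: "finite Hs" "card Hs = n" "Hs \<subseteq> B" by blast
  have "independent Hs" using B(2) Hs(3) by (rule independent_mono)
  then show ?thesis using Hs B(1) by blast
qed

lemma disjoint_span_infinite_dim:
  fixes f :: "nat \<Rightarrow> 'a::banach_lattice"
  assumes f: "disjoint_seq f" "\<And>n. f n \<noteq> 0"
  shows "infinite_dimensional (closure (span (range f)))"
  unfolding infinite_dimensional_def
proof
  assume "\<exists>B. finite B \<and> span B = closure (span (range f))"
  then obtain B where B: "finite B" "span B = closure (span (range f))" by blast
  have fB: "f k \<in> span B" for k
    using B(2) closure_subset span_base[of "f k" "range f"] by blast
  obtain c where c: "\<exists>k\<in>{0..card B}. c k \<noteq> 0" "(\<Sum>k\<in>{0..card B}. c k *\<^sub>R f k) = 0"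
    apply (rule dep_family[OF B(1), of "{0..card B}" f])
    apply simp
    apply simp
    apply (rule fB)
    subgoal premises prems for c by (rule prems(1)[of c]) (rule prems)+
    done
  then obtain k where k: "k \<in> {0..card B}" "c k \<noteq> 0" by blast
  have "norm (c k *\<^sub>R f k) \<le> norm (\<Sum>k\<in>{0..card B}. c k *\<^sub>R f k)"
    by (rule disjoint_seq_coef_le[OF f(1) _ k(1)]) simp
  then have "norm (c k *\<^sub>R f k) \<le> 0" using c(2) by (simp only: norm_zero)
  then have "c k *\<^sub>R f k = 0" by (simp only: norm_le_zero_iff)
  then show False using k(2) f(2)[of k] by simp
qed

lemma almost_disjoint_mono:
  "almost_disjoint_in H g \<Longrightarrow> H \<subseteq> G \<Longrightarrow> almost_disjoint_in G g"
  unfolding almost_disjoint_in_def by blast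

lemma span_decomp:
  fixes f :: "nat \<Rightarrow> 'a::real_vector" and N :: nat
  assumes "v \<in> span (range f)"
  shows "\<exists>w t. w \<in> span (f ` {..<N}) \<and> t \<in> span (f ` {N..}) \<and> v = w + t"
proof -
  obtain A a where A: "finite A" "A \<subseteq> UNIV" "v = (\<Sum>n\<in>A. a n *\<^sub>R f n)"
    by (rule span_image_rep[of v f UNIV]) (use assms in simp)
  have "v = (\<Sum>n\<in>A \<inter> {..<N}. a n *\<^sub>R f n) + (\<Sum>n\<in>A - {..<N}. a n *\<^sub>R f n)"
    using A(1,3) by (simp add: sum.Int_Diff)
  moreover have "(\<Sum>n\<in>A \<inter> {..<N}. a n *\<^sub>R f n) \<in> span (f ` {..<N})"
    by (rule sum_in_span) blast
  moreover have "(\<Sum>n\<in>A - {..<N}. a n *\<^sub>R f n) \<in> span (f ` {N..})"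
    by (rule sum_in_span) auto
  ultimately show ?thesis by blast
qed

lemma gliding_step:
  fixes f :: "nat \<Rightarrow> 'a::banach_lattice"
  assumes H: "subspace H" "infinite_dimensional H" "H \<subseteq> closure (span (range f))"
    and d: "\<delta> > 0"
  shows "\<exists>h A a. h \<in> H \<and> norm h = 1 \<and> finite A \<and> A \<subseteq> {N..} \<and> norm (h - (\<Sum>n\<in>A. a n *\<^sub>R f n)) \<le> \<delta>"
proof -
  obtain Hs where Hs: "finite Hs" "card Hs = Suc N" "Hs \<subseteq> H" "independent Hs"
    using infinite_dim_independent[OF H(1,2), of "Suc N"] by blast
  obtain m where m: "m > 0" "\<And>u. m * (\<Sum>b\<in>Hs. \<bar>u b\<bar>) \<le> norm (\<Sum>b\<in>Hs. u b *\<^sub>R b)"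
    using norm_equiv_independent[OF Hs(1,4)] by blast
  define \<eta> where "\<eta> = m * \<delta>"
  have eta: "\<eta> > 0" unfolding \<eta>_def using m d by simp
  define vv where "vv h = (SOME v. v \<in> span (range f) \<and> norm (h - v) < \<eta>)" for h
  have vv: "vv h \<in> span (range f) \<and> norm (h - vv h) < \<eta>" if hH: "h \<in> Hs" for h
  proof -
    have "h \<in> closure (span (range f))" using hH Hs(3) H(3) by blast
    then obtain v where v: "v \<in> span (range f)" "dist v h < \<eta>"
      using closure_approachable[of h] eta by blast
    then have "\<exists>v. v \<in> span (range f) \<and> norm (h - v) < \<eta>"
      by (intro exI[of _ v]) (simp add: dist_norm norm_minus_commute)
    then show ?thesis unfolding vv_def by (rule someI_ex)
  qed
  define ww where "ww h = (SOME w. w \<in> span (f ` {..<N}) \<and> vv h - w \<in> span (f ` {N..}))" for h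
  define tt where "tt h = vv h - ww h" for h
  have ww: "ww h \<in> span (f ` {..<N}) \<and> tt h \<in> span (f ` {N..})" if hH: "h \<in> Hs" for h
  proof -
    obtain w t where "w \<in> span (f ` {..<N})" "t \<in> span (f ` {N..})" "vv h = w + t"
      using span_decomp[of "vv h" f N] vv[OF hH] by blast
    then have "\<exists>w. w \<in> span (f ` {..<N}) \<and> vv h - w \<in> span (f ` {N..})"
      by (intro exI[of _ w]) simp
    then show ?thesis unfolding ww_def tt_def by (rule someI_ex)
  qed
  have vwt: "\<And>h. h \<in> Hs \<Longrightarrow> norm (h - vv h) < \<eta>"
    "\<And>h. h \<in> Hs \<Longrightarrow> ww h \<in> span (f ` {..<N})" "\<And>h. h \<in> Hs \<Longrightarrow> tt h \<in> span (f ` {N..})"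
    "\<And>h. vv h = ww h + tt h"
    using vv ww by (auto simp: tt_def)
  have cardB: "card (f ` {..<N}) < card Hs" using Hs(2) card_image_le[of "{..<N}" f] by simp
  obtain c where c: "\<exists>h\<in>Hs. c h \<noteq> 0" "(\<Sum>h\<in>Hs. c h *\<^sub>R ww h) = 0"
    apply (rule dep_family[of "f ` {..<N}" Hs ww])
    apply simp
    apply (rule Hs(1))
    apply (rule cardB)
    apply (rule vwt(2), assumption)
    subgoal premises prems for c by (rule prems(1)[of c]) (rule prems)+
    done
  define hs where "hs = (\<Sum>h\<in>Hs. c h *\<^sub>R h)"
  define vs where "vs = (\<Sum>h\<in>Hs. c h *\<^sub>R vv h)"
  define sc where "sc = (\<Sum>h\<in>Hs. \<bar>c h\<bar>)"
  have scpos: "sc > 0"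
  proof -
    obtain h where "h \<in> Hs" "c h \<noteq> 0" using c(1) by blast
    then have "\<bar>c h\<bar> \<le> sc" unfolding sc_def using Hs(1) by (intro member_le_sum) auto
    then show ?thesis using \<open>c h \<noteq> 0\<close> by simp
  qed
  have hsH: "hs \<in> H" unfolding hs_def using H(1) Hs(3) by (intro subspace_sum subspace_scale) auto
  have hsn: "m * sc \<le> norm hs" unfolding hs_def sc_def by (rule m(2))
  have vsT: "vs \<in> span (f ` {N..})"
  proof -
    have "vs = (\<Sum>h\<in>Hs. c h *\<^sub>R ww h) + (\<Sum>h\<in>Hs. c h *\<^sub>R tt h)"
      unfolding vs_def using vwt(4) by (simp add: scaleR_add_right sum.distrib)
    also have "\<dots> = (\<Sum>h\<in>Hs. c h *\<^sub>R tt h)" using c(2) by simp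
    finally show ?thesis using vwt(3) by (simp add: span_sum span_scale)
  qed
  have hv: "norm (hs - vs) \<le> \<eta> * sc"
  proof -
    have "hs - vs = (\<Sum>h\<in>Hs. c h *\<^sub>R (h - vv h))"
      unfolding hs_def vs_def by (simp add: sum_subtractf scaleR_diff_right)
    then have "norm (hs - vs) \<le> (\<Sum>h\<in>Hs. norm (c h *\<^sub>R (h - vv h)))"
      by (simp only: norm_sum)
    also have "\<dots> \<le> (\<Sum>h\<in>Hs. \<eta> * \<bar>c h\<bar>)"
    proof (rule sum_mono)
      fix h assume "h \<in> Hs"
      then have "\<bar>c h\<bar> * norm (h - vv h) \<le> \<bar>c h\<bar> * \<eta>"
        using vwt(1)[of h] by (intro mult_left_mono) auto
      then show "norm (c h *\<^sub>R (h - vv h)) \<le> \<eta> * \<bar>c h\<bar>" by (simp add: mult.commute)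
    qed
    also have "\<dots> = \<eta> * sc" unfolding sc_def by (simp add: sum_distrib_left)
    finally show ?thesis .
  qed
  have "m * sc > 0" using scpos m by simp
  then have hspos: "norm hs > 0" using hsn by linarith
  define h where "h = (1 / norm hs) *\<^sub>R hs"
  define x where "x = (1 / norm hs) *\<^sub>R vs"
  have "h \<in> H" unfolding h_def using H(1) hsH subspace_scale by blast
  moreover have "norm h = 1" unfolding h_def using hspos by simp
  moreover have "x \<in> span (f ` {N..})" unfolding x_def using vsT by (rule span_scale)
  moreover have "norm (h - x) \<le> \<delta>"
  proof -
    have "h - x = (1 / norm hs) *\<^sub>R (hs - vs)" unfolding h_def x_def by (simp add: scaleR_diff_right)
    then have "norm (h - x) = norm (hs - vs) / norm hs" by simp
    also have "\<dots> \<le> (\<eta> * sc) / (m * sc)"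
      using hv hsn hspos scpos m eta by (intro frac_le) auto
    also have "\<dots> = \<delta>" unfolding \<eta>_def using m scpos by simp
    finally show ?thesis .
  qed
  ultimately show ?thesis
  proof -
    assume a: "h \<in> H" "norm h = 1" "x \<in> span (f ` {N..})" "norm (h - x) \<le> \<delta>"
    obtain A a where A: "finite A" "A \<subseteq> {N..}" "x = (\<Sum>n\<in>A. a n *\<^sub>R f n)"
      apply (rule span_image_rep[OF a(3)])
      subgoal premises prems for A a by (rule prems(1)[of A a]) (rule prems)+
      done
    show ?thesis
      apply (rule exI[of _ h], rule exI[of _ A], rule exI[of _ a])
      using a A by simp
  qed
qed

lemma gliding_hump:
  fixes f :: "nat \<Rightarrow> 'a::banach_lattice"
  assumes f: "disjoint_seq f"
    and H: "subspace H" "infinite_dimensional H" "H \<subseteq> closure (span (range f))"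
  shows "\<exists>g. almost_disjoint_in H g"
proof -
  define Pk where "Pk k A z \<longleftrightarrow> fst z \<in> H \<and> norm (fst z) = 1 \<and>
      norm (fst z - (\<Sum>n\<in>A. snd z n *\<^sub>R f n)) \<le> (1/2::real)^k"
    for k A and z :: "'a \<times> (nat \<Rightarrow> real)"
  have step: "\<exists>A z. finite A \<and> A \<subseteq> {N..} \<and> Pk k A z" for N k
  proof -
    have "\<exists>h A a. h \<in> H \<and> norm h = 1 \<and> finite A \<and> A \<subseteq> {N..} \<and>
      norm (h - (\<Sum>n\<in>A. a n *\<^sub>R f n)) \<le> (1/2::real)^k"
      by (rule gliding_step[OF H]) simp
    then obtain h A a where "h \<in> H" "norm h = 1" "finite A" "A \<subseteq> {N..}"
      "norm (h - (\<Sum>n\<in>A. a n *\<^sub>R f n)) \<le> (1/2::real)^k"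
      by (elim exE conjE)
    then show ?thesis unfolding Pk_def
      by (intro exI[of _ A] exI[of _ "(h, a)"]) simp
  qed
  obtain As :: "nat \<Rightarrow> nat set" and zs :: "nat \<Rightarrow> 'a \<times> (nat \<Rightarrow> real)"
    where As: "\<And>k. finite (As k)" "\<And>k. As k \<subseteq> {k..}"
    and P: "\<And>k. Pk k (As k) (zs k)"
    and D: "\<And>k j. k \<noteq> j \<Longrightarrow> As k \<inter> As j = {}"
    apply (rule blocks[of Pk])
    subgoal for N k by (rule step)
    subgoal premises prems for As zs by (rule prems(1)[of As zs]) (rule prems; assumption)+
    done
  define g where "g k = fst (zs k)" for k
  define x where "x k = (\<Sum>n\<in>As k. snd (zs k) n *\<^sub>R f n)" for k
  have "almost_disjoint_in H g"
    unfolding almost_disjoint_in_def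
  proof (intro conjI allI exI[of _ x])
    show "g n \<in> H" "norm (g n) = 1" for n using P[of n] unfolding Pk_def g_def by auto
    show "disjoint_seq x" unfolding disjoint_seq_def x_def
      using disjoint_seq_block_disj[OF f As(1) As(1) D] by blast
    show "(\<lambda>n. norm (x n - g n)) \<longlonglongrightarrow> 0"
    proof (rule Lim_null_comparison)
      show "\<forall>\<^sub>F n in sequentially. norm (norm (x n - g n)) \<le> (1/2)^n"
        using P unfolding Pk_def g_def x_def by (simp add: norm_minus_commute)
      show "(\<lambda>n. (1/2::real)^n) \<longlonglongrightarrow> 0" by (rule LIMSEQ_realpow_zero) auto
    qed
  qed
  then show ?thesis by blast
qed

lemma usf_contra:
  fixes S :: "'f::banach_lattice \<Rightarrow> 'e::banach"
  assumes S: "bounded_linear S" and G: "closed_subspace G" and u: "almost_disjoint_in G u"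
    and Su: "(\<lambda>n. norm (S (u n))) \<longlonglongrightarrow> 0" and usf: "upper_semi_fredholm_on S G"
  shows False
proof -
  have Gs: "subspace G" "closed G" using G unfolding closed_subspace_def by auto
  from u obtain v where uG: "\<And>n. u n \<in> G" and un: "\<And>n. norm (u n) = 1" and v: "disjoint_seq v"
    and vu: "(\<lambda>n. norm (v n - u n)) \<longlonglongrightarrow> 0"
    unfolding almost_disjoint_in_def by blast
  from usf obtain B where B: "finite B" "span B = {x\<in>G. S x = 0}" and cl: "closed (S ` G)"
    unfolding upper_semi_fredholm_on_def finite_dimensional_def by blast
  obtain C where C: "C > 0" and om: "\<And>y. y \<in> S ` G \<Longrightarrow> \<exists>x\<in>G. S x = y \<and> norm x \<le> C * norm y"
    using open_mapping_bound[OF S Gs cl] by blast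
  have lin: "linear S" using S bounded_linear.linear by blast
  define z where "z n = (SOME z. z \<in> G \<and> S z = S (u n) \<and> norm z \<le> C * norm (S (u n)))" for n
  have zz: "z n \<in> G \<and> S (z n) = S (u n) \<and> norm (z n) \<le> C * norm (S (u n))" for n
  proof -
    have "S (u n) \<in> S ` G" using uG by blast
    then have "\<exists>z. z \<in> G \<and> S z = S (u n) \<and> norm z \<le> C * norm (S (u n))"
      using om by blast
    then show ?thesis unfolding z_def by (rule someI_ex)
  qed
  have z: "\<And>n. z n \<in> G" "\<And>n. S (z n) = S (u n)" "\<And>n. norm (z n) \<le> C * norm (S (u n))"
    using zz by auto
  define w where "w n = u n - z n" for n
  have wB: "w n \<in> span B" for n
  proof -
    have "w n \<in> G" unfolding w_def using Gs(1) uG z(1) subspace_diff by blast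
    moreover have "S (w n) = 0" unfolding w_def using z(2) linear_diff[OF lin] by simp
    ultimately show ?thesis using B(2) by blast
  qed
  define e where "e n = norm (v n - w n)" for n
  have ebound: "e n \<le> norm (v n - u n) + C * norm (S (u n))" for n
  proof -
    have "v n - w n = (v n - u n) + z n" unfolding w_def by simp
    then have "e n \<le> norm (v n - u n) + norm (z n)" unfolding e_def
      using norm_triangle_ineq[of "v n - u n" "z n"] by (simp only:)
    then show ?thesis using z(3)[of n] by simp
  qed
  have elim: "e \<longlonglongrightarrow> 0"
  proof (rule Lim_null_comparison)
    show "\<forall>\<^sub>F n in sequentially. norm (e n) \<le> norm (v n - u n) + C * norm (S (u n))"
      using ebound by (simp add: e_def)
    show "(\<lambda>n. norm (v n - u n) + C * norm (S (u n))) \<longlonglongrightarrow> 0"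
      using tendsto_add[OF vu tendsto_mult_right_zero[OF Su]] by simp
  qed
  define d where "d = card B"
  define \<epsilon> where "\<epsilon> = 1 / (4 * (real d + 1))"
  have eps: "\<epsilon> > 0" unfolding \<epsilon>_def by simp
  have ev1: "eventually (\<lambda>n. e n < \<epsilon>) sequentially"
    using order_tendstoD(2)[OF elim eps] .
  have ev2: "eventually (\<lambda>n. norm (v n - u n) < 1/2) sequentially"
    using order_tendstoD(2)[OF vu, of "1/2"] by (simp only: norm_zero)
  obtain N where N: "\<And>n. n \<ge> N \<Longrightarrow> e n < \<epsilon> \<and> norm (v n - u n) < 1/2"
    using eventually_conj[OF ev1 ev2] unfolding eventually_sequentially by blast
  define I where "I = {N..N+d}"
  have finI: "finite I" unfolding I_def by simp
  have cardI: "card I = d + 1" unfolding I_def by simp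
  have cardlt: "card I > card B" using cardI unfolding d_def by simp
  obtain c where c: "\<exists>k\<in>I. c k \<noteq> 0" "(\<Sum>k\<in>I. c k *\<^sub>R w k) = 0"
    apply (rule dep_family[OF B(1) finI cardlt, of w])
     apply (rule wB)
    subgoal premises prems for c by (rule prems(1)[of c]) (rule prems)+
    done
  have Ine: "I \<noteq> {}" unfolding I_def by simp
  define mx where "mx = Max ((\<lambda>k. \<bar>c k\<bar>) ` I)"
  have "mx \<in> (\<lambda>k. \<bar>c k\<bar>) ` I" unfolding mx_def using finI Ine by (intro Max_in) auto
  then obtain j0 where j0: "j0 \<in> I" "\<bar>c j0\<bar> = mx" by auto
  have cle: "\<bar>c k\<bar> \<le> mx" if "k \<in> I" for k unfolding mx_def using finI that by (intro Max_ge) auto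
  have cj0: "c j0 \<noteq> 0"
  proof -
    obtain k where "k \<in> I" "c k \<noteq> 0" using c(1) by blast
    then show ?thesis using cle[of k] j0 by auto
  qed
  define c' where "c' k = c k / c j0" for k
  have c'le: "\<bar>c' k\<bar> \<le> 1" if "k \<in> I" for k
  proof -
    have "\<bar>c' k\<bar> = \<bar>c k\<bar> / \<bar>c j0\<bar>" unfolding c'_def by (simp add: abs_divide)
    also have "\<dots> \<le> 1" using cle[OF that] j0(2) cj0 divide_le_eq_1_pos[of "\<bar>c j0\<bar>" "\<bar>c k\<bar>"] by simp
    finally show ?thesis .
  qed
  have c'w: "(\<Sum>k\<in>I. c' k *\<^sub>R w k) = 0"
  proof -
    have "(\<Sum>k\<in>I. c' k *\<^sub>R w k) = (1 / c j0) *\<^sub>R (\<Sum>k\<in>I. c k *\<^sub>R w k)"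
      unfolding c'_def by (simp add: scaleR_sum_right)
    then show ?thesis using c(2) by simp
  qed
  have "norm (c' j0 *\<^sub>R v j0) \<le> norm (\<Sum>k\<in>I. c' k *\<^sub>R v k)"
    by (rule disjoint_seq_coef_le[OF v finI j0(1)])
  then have lower: "norm (v j0) \<le> norm (\<Sum>k\<in>I. c' k *\<^sub>R v k)" unfolding c'_def using cj0 by simp
  have "(\<Sum>k\<in>I. c' k *\<^sub>R v k) = (\<Sum>k\<in>I. c' k *\<^sub>R v k) - (\<Sum>k\<in>I. c' k *\<^sub>R w k)" using c'w by simp
  also have "\<dots> = (\<Sum>k\<in>I. c' k *\<^sub>R (v k - w k))" by (simp add: sum_subtractf scaleR_diff_right)
  finally have "norm (\<Sum>k\<in>I. c' k *\<^sub>R v k) \<le> (\<Sum>k\<in>I. norm (c' k *\<^sub>R (v k - w k)))"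
    by (simp only: norm_sum)
  also have "\<dots> \<le> (\<Sum>k\<in>I. \<epsilon>)"
  proof (rule sum_mono)
    fix k assume k: "k \<in> I"
    then have "k \<ge> N" unfolding I_def by simp
    then have "e k < \<epsilon>" using N by blast
    then have "\<bar>c' k\<bar> * norm (v k - w k) \<le> 1 * \<epsilon>"
      using c'le[OF k] unfolding e_def by (intro mult_mono) auto
    then show "norm (c' k *\<^sub>R (v k - w k)) \<le> \<epsilon>" by simp
  qed
  also have "\<dots> = (real d + 1) * \<epsilon>" using cardI by simp
  also have "\<dots> = 1/4" unfolding \<epsilon>_def by simp
  finally have upper: "norm (v j0) \<le> 1/4" using lower by linarith
  have "j0 \<ge> N" using j0(1) unfolding I_def by simp
  then have "norm (v j0 - u j0) < 1/2" using N by blast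
  moreover have "norm (u j0) \<le> norm (v j0) + norm (v j0 - u j0)"
    using norm_triangle_ineq4[of "v j0" "v j0 - u j0"] by simp
  ultimately show False using upper un[of j0] by linarith
qed

lemma bb_imp_usf:
  fixes S :: "'f::real_normed_vector \<Rightarrow> 'e::real_normed_vector"
  assumes S: "bounded_linear S" and G: "closed_subspace G" and bb: "bounded_below_on S G"
    and cpl: "complete (UNIV :: 'f set)"
  shows "upper_semi_fredholm_on S G"
proof -
  have Gs: "subspace G" "closed G" using G unfolding closed_subspace_def by auto
  from bb obtain c where c: "c > 0" "\<And>x. x \<in> G \<Longrightarrow> c * norm x \<le> norm (S x)"
    unfolding bounded_below_on_def by blast
  have lin: "linear S" using S bounded_linear.linear by blast
  have "{x\<in>G. S x = 0} = {0}"
  proof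
    show "{x\<in>G. S x = 0} \<subseteq> {0}"
    proof
      fix x assume "x \<in> {x\<in>G. S x = 0}"
      then have "x \<in> G" "S x = 0" by auto
      then have "c * norm x \<le> 0" using c(2)[of x] by simp
      then show "x \<in> {0}" using c(1) by (simp add: mult_le_0_iff)
    qed
    show "{0} \<subseteq> {x\<in>G. S x = 0}" using Gs(1) subspace_0 linear_0[OF lin] by auto
  qed
  then have fd: "finite_dimensional {x\<in>G. S x = 0}"
    unfolding finite_dimensional_def by (intro exI[of _ "{}"]) simp
  have "closed (S ` G)"
    unfolding closed_sequential_limits
  proof (intro allI impI, elim conjE)
    fix y l assume y: "\<forall>n. y n \<in> S ` G" and lim: "y \<longlonglongrightarrow> l"
    define x where "x n = (SOME x. x \<in> G \<and> y n = S x)" for n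
    have xx: "x n \<in> G \<and> y n = S (x n)" for n
    proof -
      have "\<exists>x. x \<in> G \<and> y n = S x" using y by blast
      then show ?thesis unfolding x_def by (rule someI_ex)
    qed
    have x: "\<And>n. x n \<in> G" "\<And>n. y n = S (x n)" using xx by auto
    have "Cauchy x"
    proof (rule CauchyI)
      fix e :: real assume e: "e > 0"
      obtain M where M: "\<And>m n. m \<ge> M \<Longrightarrow> n \<ge> M \<Longrightarrow> norm (y m - y n) < c * e"
        using CauchyD[OF LIMSEQ_imp_Cauchy[OF lim], of "c * e"] c(1) e by auto
      show "\<exists>M. \<forall>m\<ge>M. \<forall>n\<ge>M. norm (x m - x n) < e"
      proof (intro exI allI impI)
        fix m n assume mn: "m \<ge> M" "n \<ge> M"
        have "x m - x n \<in> G" using Gs(1) x(1) subspace_diff by blast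
        then have "c * norm (x m - x n) \<le> norm (S (x m - x n))" by (rule c(2))
        also have "S (x m - x n) = y m - y n" using x(2) linear_diff[OF lin] by simp
        finally have "c * norm (x m - x n) < c * e" using M[OF mn] by linarith
        then show "norm (x m - x n) < e" using c(1) by simp
      qed
    qed
    then obtain l' where l': "x \<longlonglongrightarrow> l'" using cpl by (auto simp: complete_def)
    have cs: "\<forall>x l. (\<forall>n. x n \<in> G) \<and> x \<longlonglongrightarrow> l \<longrightarrow> l \<in> G"
      using Gs(2) by (simp only: closed_sequential_limits)
    have l'G: "l' \<in> G" using x(1) l' by (intro cs[rule_format] conjI) auto
    have "(\<lambda>n. S (x n)) \<longlonglongrightarrow> S l'" by (rule bounded_linear.tendsto[OF S l'])
    moreover have "y = (\<lambda>n. S (x n))" by (rule ext) (rule x(2))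
    ultimately have "y \<longlonglongrightarrow> S l'" by simp
    then have "l = S l'" using lim LIMSEQ_unique by blast
    then show "l \<in> S ` G" using l'G by blast
  qed
  then show ?thesis unfolding upper_semi_fredholm_on_def using fd by blast
qed

lemma ad_null_not_bb:
  assumes "almost_disjoint_in G g" "(\<lambda>n. norm (S (g n))) \<longlonglongrightarrow> 0"
  shows "\<not> bounded_below_on S G"
proof
  assume "bounded_below_on S G"
  then obtain c where c: "c > 0" "\<And>x. x \<in> G \<Longrightarrow> c * norm x \<le> norm (S x)"
    unfolding bounded_below_on_def by blast
  have g: "\<And>n. g n \<in> G" "\<And>n. norm (g n) = 1" using assms(1) unfolding almost_disjoint_in_def by auto
  have "eventually (\<lambda>n. norm (S (g n)) < c) sequentially"
    using order_tendstoD(2)[OF assms(2) c(1)] .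
  then obtain n where "norm (S (g n)) < c" using eventually_sequentially by auto
  moreover have "c \<le> norm (S (g n))" using c(2)[OF g(1)[of n]] g(2)[of n] by simp
  ultimately show False by simp
qed

lemma closed_span_nondispersed:
  fixes f :: "nat \<Rightarrow> 'a::banach_lattice"
  assumes f: "disjoint_seq f" "\<And>n. f n \<noteq> 0"
  shows "closed_subspace (closure (span (range f)))" "\<not> dispersed (closure (span (range f)))"
proof -
  show "closed_subspace (closure (span (range f)))"
    unfolding closed_subspace_def by (simp add: subspace_closure_nv subspace_span)
  define g where "g n = (1 / norm (f n)) *\<^sub>R f n" for n
  have "almost_disjoint_in (closure (span (range f))) g"
    unfolding almost_disjoint_in_def
  proof (intro conjI allI exI[of _ g])
    fix n
    have "g n \<in> span (range f)" unfolding g_def by (intro span_scale span_base) simp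
    then show "g n \<in> closure (span (range f))" using closure_subset by blast
    show "norm (g n) = 1" unfolding g_def using f(2)[of n] by simp
  next
    show "disjoint_seq g" using f(1) unfolding disjoint_seq_def g_def
      by (metis ldisjoint_scaleR ldisjoint_sym)
    show "(\<lambda>n. norm (g n - g n)) \<longlonglongrightarrow> 0" by simp
  qed
  then show "\<not> dispersed (closure (span (range f)))" unfolding dispersed_def by blast
qed

theorem proposition5p10:
  fixes S :: "'f::banach_lattice \<Rightarrow> 'e::banach"
  assumes "bounded_linear S"
  defines "C1 \<equiv> (\<forall>f::nat \<Rightarrow> 'f. (\<forall>n. f n \<noteq> 0) \<and> disjoint_seq f \<longrightarrow>
                    \<not> bounded_below_on S (closure (span (range f))))"
      and "C2 \<equiv> (\<forall>f::nat \<Rightarrow> 'f. (\<forall>n. f n \<noteq> 0) \<and> disjoint_seq f \<longrightarrow>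
                    strictly_singular_on S (closure (span (range f))))"
      and "C3 \<equiv> (\<forall>G::'f set. anti_dispersed G \<longrightarrow> strictly_singular_on S G)"
      and "C4 \<equiv> (\<forall>G::'f set. closed_subspace G \<and> \<not> dispersed G \<longrightarrow> \<not> bounded_below_on S G)"
      and "C5 \<equiv> (\<forall>G::'f set. closed_subspace G \<and> \<not> dispersed G \<longrightarrow> \<not> upper_semi_fredholm_on S G)"
      and "C6 \<equiv> (\<forall>G::'f set. closed_subspace G \<and> \<not> dispersed G \<longrightarrow>
                    (\<exists>g. almost_disjoint_in G g \<and> (\<lambda>n. norm (S (g n))) \<longlonglongrightarrow> 0))"
  shows "(C1 \<longleftrightarrow> C2) \<and> (C1 \<longleftrightarrow> C3) \<and> (C1 \<longleftrightarrow> C4) \<and> (C1 \<longleftrightarrow> C5) \<and> (C1 \<longleftrightarrow> C6)"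
proof -
  note S = assms(1)
  have c1_c6: "C6" if "C1"
    unfolding C6_def
  proof (intro allI impI, elim conjE)
    fix G :: "'f set" assume G: "closed_subspace G" "\<not> dispersed G"
    have "subspace G" using G(1) unfolding closed_subspace_def by blast
    then show "\<exists>g. almost_disjoint_in G g \<and> (\<lambda>n. norm (S (g n))) \<longlonglongrightarrow> 0"
      using c1_imp_c6[OF S _ _ G(2)] \<open>C1\<close> unfolding C1_def by blast
  qed
  have c6_c4: "C4" if "C6"
    using \<open>C6\<close> ad_null_not_bb unfolding C4_def C6_def by blast
  have c4_c1: "C1" if "C4"
    unfolding C1_def
  proof (intro allI impI, elim conjE)
    fix f :: "nat \<Rightarrow> 'f" assume f: "\<forall>n. f n \<noteq> 0" "disjoint_seq f"
    show "\<not> bounded_below_on S (closure (span (range f)))"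
      using \<open>C4\<close> closed_span_nondispersed[OF f(2)] f(1) unfolding C4_def by blast
  qed
  have c1_c5: "C5" if "C1"
    unfolding C5_def
  proof (intro allI impI, elim conjE)
    fix G :: "'f set" assume G: "closed_subspace G" "\<not> dispersed G"
    obtain g where g: "almost_disjoint_in G g" "(\<lambda>n. norm (S (g n))) \<longlonglongrightarrow> 0"
      using c1_c6[OF \<open>C1\<close>] G unfolding C6_def by blast
    show "\<not> upper_semi_fredholm_on S G"
      using usf_contra[OF S G(1) g] by blast
  qed
  have c5_c4: "C4" if "C5"
    unfolding C4_def
  proof (intro allI impI, elim conjE)
    fix G :: "'f set" assume G: "closed_subspace G" "\<not> dispersed G"
    show "\<not> bounded_below_on S G"
    proof
      assume "bounded_below_on S G"
      then have "upper_semi_fredholm_on S G"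
        using bb_imp_usf[OF S G(1)] complete_UNIV by blast
      then show False using \<open>C5\<close> G unfolding C5_def by blast
    qed
  qed
  have c4_c2: "C2" if "C4"
    unfolding C2_def strictly_singular_on_def
  proof (intro allI impI, elim conjE)
    fix f :: "nat \<Rightarrow> 'f" and H assume f: "\<forall>n. f n \<noteq> 0" "disjoint_seq f"
      and H: "subspace H" "H \<subseteq> closure (span (range f))" "infinite_dimensional H"
    show "\<not> bounded_below_on S H"
    proof
      assume bb: "bounded_below_on S H"
      then have bbc: "bounded_below_on S (closure H)" by (rule bounded_below_closure[OF S])
      obtain g where "almost_disjoint_in H g" using gliding_hump[OF f(2) H(1) H(3) H(2)] by blast
      then have "almost_disjoint_in (closure H) g" using closure_subset almost_disjoint_mono by blast
      then have "\<not> dispersed (closure H)" unfolding dispersed_def by blast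
      moreover have "closed_subspace (closure H)"
        unfolding closed_subspace_def using subspace_closure_nv[OF H(1)] by simp
      ultimately show False using \<open>C4\<close> bbc unfolding C4_def by blast
    qed
  qed
  have c2_c1: "C1" if "C2"
    unfolding C1_def
  proof (intro allI impI, elim conjE)
    fix f :: "nat \<Rightarrow> 'f" assume f: "\<forall>n. f n \<noteq> 0" "disjoint_seq f"
    have ss: "strictly_singular_on S (closure (span (range f)))" using \<open>C2\<close> f unfolding C2_def by blast
    have "subspace (closure (span (range f)))" by (simp add: subspace_closure_nv subspace_span)
    moreover have "infinite_dimensional (closure (span (range f)))"
      using disjoint_span_infinite_dim f by blast
    ultimately show "\<not> bounded_below_on S (closure (span (range f)))"
      using ss unfolding strictly_singular_on_def by blast
  qed
  have c4_c3: "C3" if "C4"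
    unfolding C3_def strictly_singular_on_def
  proof (intro allI impI, elim conjE)
    fix G H :: "'f set" assume G: "anti_dispersed G" and H: "subspace H" "H \<subseteq> G" "infinite_dimensional H"
    show "\<not> bounded_below_on S H"
    proof
      assume bb: "bounded_below_on S H"
      then have bbc: "bounded_below_on S (closure H)" by (rule bounded_below_closure[OF S])
      have Gc: "closed G" using G unfolding anti_dispersed_def closed_subspace_def by blast
      have "closure H \<subseteq> G" using H(2) Gc closure_minimal by blast
      moreover have cs: "closed_subspace (closure H)"
        unfolding closed_subspace_def using subspace_closure_nv[OF H(1)] by simp
      moreover have "infinite_dimensional (closure H)" using infinite_dim_closure H(1,3) by blast
      ultimately have "\<not> dispersed (closure H)" using G unfolding anti_dispersed_def by blast
      then show False using \<open>C4\<close> bbc cs unfolding C4_def by blast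
    qed
  qed
  have c3_c1: "C1" if "C3"
    unfolding C1_def
  proof (intro allI impI, elim conjE)
    fix f :: "nat \<Rightarrow> 'f" assume f: "\<forall>n. f n \<noteq> 0" "disjoint_seq f"
    define X where "X = closure (span (range f))"
    have Xs: "subspace X" unfolding X_def by (simp add: subspace_closure_nv subspace_span)
    have Xcs: "closed_subspace X" unfolding closed_subspace_def X_def
      by (simp add: subspace_closure_nv subspace_span)
    have "anti_dispersed X"
      unfolding anti_dispersed_def
    proof (intro conjI Xcs notI, elim exE conjE)
      fix H assume H: "H \<subseteq> X" "closed_subspace H" "infinite_dimensional H" "dispersed H"
      have "subspace H" using H(2) unfolding closed_subspace_def by blast
      then obtain g where "almost_disjoint_in H g"
        using gliding_hump[OF f(2) _ H(3)] H(1) unfolding X_def by blast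
      then show False using H(4) unfolding dispersed_def by blast
    qed
    then have ss: "strictly_singular_on S X" using \<open>C3\<close> unfolding C3_def by blast
    have "infinite_dimensional X" unfolding X_def using disjoint_span_infinite_dim f by blast
    then show "\<not> bounded_below_on S (closure (span (range f)))"
      using ss Xs unfolding strictly_singular_on_def X_def by blast
  qed
  show ?thesis
    using c1_c6 c6_c4 c4_c1 c1_c5 c5_c4 c4_c2 c2_c1 c4_c3 c3_c1 by blast
qed

end
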